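(* Let $w\in G(m,p,n)$ with $\ell_R(w)=\operatorname{codim}\operatorname{fix}(w)$. Suppose there is a set $S$ of cycles of $w$ whose weights sum to $0\pmod p$ but which cannot be partitioned into singletons $\{C\}$ with $C$ of weight $\equiv 0\pmod p$ and pairs of cycles whose weights sum to $0$ in $\mathbb Z/m\mathbb Z$. Then there exists $u\in[\mathrm{id},w]_{\mathrm{cdf}}$ with $u\notin[\mathrm{id},w]_{\ell_R}$.
   Context: Let $m,p,n$ be positive integers with $p\mid m$ and $\zeta=e^{2\pi i/m}$. The group $G(m,1,n)$ consists of pairs $w=[u;a]$ with $u\in\mathfrak S_n$ (the underlying permutation) and $a=(a_1,\dots,a_n)\in(\mathbb Z/m\mathbb Z)^n$ (the weights); $[u;a]$ is identified with the $n\times n$ monomial matrix having entry $\zeta^{a_i}$ in position $(u(i),i)$ and zeros elsewhere, the group law is matrix multiplication, and the group acts on $\mathbb C^n$. A cycle of $w$ is a cycle of $u$ (fixed points count as cycles of size $1$); $c(w)$ is the number of cycles of $w$ and $c_0(w)$ the number of cycles of weight $0$, where the weight of a set $I\subseteq[n]$ (e.g. the underlying set of a cycle) is $\sum_{i\in I}a_i\in\mathbb Z/m\mathbb Z$, and $\mathrm{wt}(w)=\sum_{i=1}^n a_i$. Since $p\mid m$, it makes sense to say an element of $\mathbb Z/m\mathbb Z$ is $\equiv 0\pmod p$. $G(m,p,n)=\{w\in G(m,1,n):\mathrm{wt}(w)\equiv 0\pmod p\}$. A reflection is an element $g$ whose fixed space $\operatorname{fix}(g)=\ker(g-1)\subseteq\mathbb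 C^n$ has codimension $1$; $R$ is the set of reflections of $G(m,p,n)$ (they generate the group). $\ell_R(g)$ is the minimum number of reflections whose product is $g$, and $\operatorname{codim}\operatorname{fix}(g)=n-\dim\operatorname{fix}(g)$. For $f\in\{\ell_R,\operatorname{codim}\operatorname{fix}\}$ define $x\le_f y$ iff $f(x)+f(x^{-1}y)=f(y)$ (a partial order), and $[\mathrm{id},w]_f=\{u: u\le_f w\}$; the subscript $\mathrm{cdf}$ means $f=\operatorname{codim}\operatorname{fix}$. *)

theory Defs
  imports "HOL-Analysis.Analysis" "HOL-Number_Theory.Cong"
begin

text \<open>Elements of G(m,1,n) are monomial n x n complex matrices; the index type 'n
  with CARD('n) = n plays the role of [n].  The pair [u;a] (u a permutation of
  the index type, a a weight vector with entries read modulo m) is the matrix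
  with entry zeta^(a j) at position (u j, j), where zeta = exp(2 pi i / m).\<close>

definition mono_mat :: "nat \<Rightarrow> ('n::finite \<Rightarrow> 'n) \<Rightarrow> ('n \<Rightarrow> int) \<Rightarrow> complex^'n^'n" where
  "mono_mat m u a = (\<chi> i j. if i = u j then cis (2 * pi * of_int (a j) / of_nat m) else 0)"

text \<open>weight of a set I of indices (an integer representing an element of Z/mZ)\<close>
definition wt_set :: "('n \<Rightarrow> int) \<Rightarrow> 'n set \<Rightarrow> int" where
  "wt_set a I = (\<Sum>i\<in>I. a i)"

text \<open>G(m,p,n): elements of G(m,1,n) whose total weight is 0 mod p\<close>
definition Gmpn :: "nat \<Rightarrow> nat \<Rightarrow> (complex^'n::finite^'n) set" where
  "Gmpn m p = {mono_mat m u a | u a. u permutes UNIV \<and> [wt_set a UNIV = 0] (mod int p)}"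

text \<open>fixed space and its codimension in C^n\<close>
definition fixsp :: "complex^'n::finite^'n \<Rightarrow> (complex^'n) set" where
  "fixsp g = {x. g *v x = x}"

definition codimfix :: "complex^'n::finite^'n \<Rightarrow> nat" where
  "codimfix g = CARD('n) - vec.dim (fixsp g)"

definition reflections :: "nat \<Rightarrow> nat \<Rightarrow> (complex^'n::finite^'n) set" where
  "reflections m p = {g \<in> Gmpn m p. codimfix g = 1}"

text \<open>reflection length: minimal number of reflections with product g\<close>
definition lenR :: "nat \<Rightarrow> nat \<Rightarrow> complex^'n::finite^'n \<Rightarrow> nat" where
  "lenR m p g = (LEAST k. \<exists>rs. length rs = k \<and> set rs \<subseteq> reflections m p \<and> foldr (**) rs (mat 1) = g)"

text \<open>x \<le>_f y iff f x + f (x^-1 y) = f y\<close>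
definition le_f :: "(complex^'n::finite^'n \<Rightarrow> nat) \<Rightarrow> complex^'n^'n \<Rightarrow> complex^'n^'n \<Rightarrow> bool" where
  "le_f f x y \<longleftrightarrow> f x + f (matrix_inv x ** y) = f y"

text \<open>[id,w]_f, as a subset of the group G(m,p,n)\<close>
definition interval_f :: "nat \<Rightarrow> nat \<Rightarrow> (complex^'n::finite^'n \<Rightarrow> nat) \<Rightarrow> complex^'n^'n \<Rightarrow> (complex^'n^'n) set" where
  "interval_f m p f w = {x \<in> Gmpn m p. le_f f x w}"

text \<open>cycles of the permutation u (underlying sets), fixed points included\<close>
definition cycles_of :: "('n \<Rightarrow> 'n) \<Rightarrow> 'n set set" where
  "cycles_of u = {{(u ^^ k) i | k. True} | i. True}"

text \<open>P is a partition of S into singletons {C} with wt C = 0 mod p and pairs {C,D}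
  (C \<noteq> D) with wt C + wt D = 0 in Z/mZ\<close>
definition good_partition :: "nat \<Rightarrow> nat \<Rightarrow> ('n \<Rightarrow> int) \<Rightarrow> 'n set set \<Rightarrow> 'n set set set \<Rightarrow> bool" where
  "good_partition m p a S P \<longleftrightarrow>
     \<Union>P = S \<and> (\<forall>B\<in>P. \<forall>B'\<in>P. B \<noteq> B' \<longrightarrow> B \<inter> B' = {}) \<and>
     (\<forall>B\<in>P. (\<exists>C. B = {C} \<and> [wt_set a C = 0] (mod int p)) \<or>
             (\<exists>C D. C \<noteq> D \<and> B = {C, D} \<and> [wt_set a C + wt_set a D = 0] (mod int m)))"

end

theory Submission
  imports Defs "HOL-Combinatorics.Orbits"
begin

(* ---- part 1 ---- *)


abbreviation zz :: "nat \<Rightarrow> int \<Rightarrow> complex" where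
  "zz m t \<equiv> cis (2 * pi * of_int t / of_nat m)"

lemma zz_add: "zz m s * zz m t = zz m (s + t)"
  by (simp add: cis_mult add_divide_distrib distrib_left)

lemma zz_nonzero: "zz m t \<noteq> 0" by simp

lemma zz_eq_1_iff: assumes "0 < m" shows "zz m t = 1 \<longleftrightarrow> int m dvd t"
proof
  assume "int m dvd t"
  then obtain k where k: "t = int m * k" by (auto elim: dvdE)
  have "2 * pi * of_int t / of_nat m = 2 * pi * of_int k" using assms by (simp add: k)
  then show "zz m t = 1" by simp
next
  assume h: "zz m t = 1"
  have "exp (\<i> * complex_of_real (2 * pi * of_int t / of_nat m)) = 1"
    using h by (simp add: cis_conv_exp mult.commute)
  then obtain n :: int where n: "2 * pi * of_int t / of_nat m = 2 * pi * of_int n"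
    by (auto simp: exp_eq_1 Ints_def)
  then have "of_int t = real m * of_int n" using assms by (simp add: field_simps)
  then have "t = int m * n" by (metis of_int_eq_iff of_int_mult of_int_of_nat_eq)
  then show "int m dvd t" by simp
qed


lemma zz_cong: assumes "0 < m" "[s = t] (mod int m)" shows "zz m s = zz m t"
proof -
  have "int m dvd s - t" using assms(2) by (simp add: cong_iff_dvd_diff)
  then have h1: "zz m (s - t) = 1" using zz_eq_1_iff[OF assms(1), of "s - t"] by blast
  have e: "zz m s = zz m (s - t) * zz m t" using zz_add[where m=m and s="s - t" and t=t] by simp
  show ?thesis using e h1 by (metis mult_1_left)
qed

lemma zz_eq_iff: assumes "0 < m" shows "zz m s = zz m t \<longleftrightarrow> [s = t] (mod int m)"
proof
  assume h: "zz m s = zz m t"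
  have e: "zz m s = zz m (s - t) * zz m t" using zz_add[where m=m and s="s - t" and t=t] by simp
  have "zz m (s - t) = 1" using e h zz_nonzero[where m=m and t=t]
    by (metis mult_cancel_right2)
  then have "int m dvd s - t" using zz_eq_1_iff[OF assms, of "s - t"] by blast
  then show "[s = t] (mod int m)" by (simp add: cong_iff_dvd_diff)
qed (rule zz_cong[OF assms])

lemma mono_mat_entry: "mono_mat m u a $ i $ j = (if i = u j then zz m (a j) else 0)"
  by (simp add: mono_mat_def)

lemma mono_mat_mult:
  "mono_mat m u a ** mono_mat m v b = mono_mat m (u \<circ> v) (\<lambda>j. a (v j) + b j)"
proof -
  have "(\<Sum>k\<in>UNIV. (if i = u k then zz m (a k) else 0) * (if k = v j then zz m (b j) else 0))
        = (if i = u (v j) then zz m (a (v j) + b j) else 0)" for i j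
  proof -
    have "(\<Sum>k\<in>UNIV. (if i = u k then zz m (a k) else 0) * (if k = v j then zz m (b j) else 0))
       = (\<Sum>k\<in>UNIV. if k = v j then (if i = u k then zz m (a k) else 0) * zz m (b j) else 0)"
      by (rule sum.cong) auto
    also have "\<dots> = (if i = u (v j) then zz m (a (v j)) else 0) * zz m (b j)"
      by (simp add: sum.delta)
    finally show ?thesis by (simp add: zz_add)
  qed
  then show ?thesis
    by (simp add: matrix_matrix_mult_def mono_mat_def vec_eq_iff)
qed

lemma mono_mat_id: "mono_mat m id (\<lambda>_. 0) = mat 1"
  by (simp add: mono_mat_def mat_def vec_eq_iff)

lemma mono_mat_cong: assumes "0 < m" "\<And>j. [a j = b j] (mod int m)"
  shows "mono_mat m u a = mono_mat m u b"
  using assms by (simp add: mono_mat_def vec_eq_iff zz_cong)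

lemma mono_mat_inj: assumes "0 < m" "mono_mat m u a = mono_mat m v b"
  shows "u = v" "\<And>j. [a j = b j] (mod int m)"
proof -
  have e: "mono_mat m u a $ i $ j = mono_mat m v b $ i $ j" for i j using assms(2) by simp
  show uv: "u = v"
  proof
    fix j show "u j = v j" using e[of "u j" j] by (simp add: mono_mat_entry split: if_splits)
  qed
  fix j show "[a j = b j] (mod int m)"
    using e[of "u j" j] uv by (simp add: mono_mat_entry zz_eq_iff[OF assms(1)])
qed

lemma mono_mat_mulv:
  assumes "bij u"
  shows "(mono_mat m u a *v x) $ i = zz m (a (inv u i)) * x $ (inv u i)"
proof -
  have "(mono_mat m u a *v x) $ i = (\<Sum>j\<in>UNIV. (if i = u j then zz m (a j) else 0) * x $ j)"
    by (simp add: matrix_vector_mult_def mono_mat_def)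
  also have "\<dots> = (\<Sum>j\<in>UNIV. if j = inv u i then zz m (a j) * x $ j else 0)"
    by (rule sum.cong) (use assms in \<open>auto simp: bij_inv_eq_iff\<close>)
  also have "\<dots> = zz m (a (inv u i)) * x $ (inv u i)" by (simp add: sum.delta)
  finally show ?thesis .
qed

definition mono_inv_w :: "('n \<Rightarrow> 'n) \<Rightarrow> ('n \<Rightarrow> int) \<Rightarrow> 'n \<Rightarrow> int" where
  "mono_inv_w u a = (\<lambda>j. - a (inv u j))"

lemma mono_mat_inv_left: assumes "bij u"
  shows "mono_mat m (inv u) (mono_inv_w u a) ** mono_mat m u a = mat 1"
proof -
  have "inv u \<circ> u = id" using assms by (simp add: bij_is_inj)
  moreover have "(\<lambda>j. mono_inv_w u a (u j) + a j) = (\<lambda>_. 0)"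
    using assms by (simp add: mono_inv_w_def bij_is_inj)
  ultimately show ?thesis by (simp add: mono_mat_mult mono_mat_id)
qed

lemma mono_mat_inv_right: assumes "bij u"
  shows "mono_mat m u a ** mono_mat m (inv u) (mono_inv_w u a) = mat 1"
proof -
  have "u \<circ> inv u = id" using assms by (metis bij_def surj_iff)
  moreover have "(\<lambda>j. a (inv u j) + mono_inv_w u a j) = (\<lambda>_. 0)" by (simp add: mono_inv_w_def)
  ultimately show ?thesis by (simp add: mono_mat_mult mono_mat_id)
qed

lemma matrix_inv_unique:
  fixes A B :: "'a::comm_ring_1^'n::finite^'n"
  assumes "A ** B = mat 1" "B ** A = mat 1" shows "matrix_inv A = B"
proof -
  have ex: "\<exists>A'. A ** A' = mat 1 \<and> A' ** A = mat 1" using assms by blast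
  define C where "C = matrix_inv A"
  have C: "A ** C = mat 1" "C ** A = mat 1"
    using someI_ex[OF ex] by (simp_all add: C_def matrix_inv_def)
  have "C = C ** (A ** B)" by (simp add: assms)
  also have "\<dots> = (C ** A) ** B" by (simp add: matrix_mul_assoc)
  also have "\<dots> = B" by (simp add: C)
  finally show ?thesis by (simp add: C_def)
qed

lemma mono_matrix_inv: assumes "bij u"
  shows "matrix_inv (mono_mat m u a) = mono_mat m (inv u) (mono_inv_w u a)"
  by (rule matrix_inv_unique) (use mono_mat_inv_left[OF assms] mono_mat_inv_right[OF assms] in auto)


(* ---- part 2 ---- *)


lemma subspace_fixsp: "vec.subspace (fixsp (g::complex^'n::finite^'n))"
  unfolding vec.subspace_def fixsp_def
  by (auto simp: matrix_vector_right_distrib vec.scale)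

lemma dim_fixsp_le: "vec.dim (fixsp (g::complex^'n::finite^'n)) \<le> CARD('n)"
  by (rule dim_subset_UNIV_cart_gen)

lemma dim_le_n: "vec.dim (W::(complex^'n::finite) set) \<le> CARD('n)"
  by (rule dim_subset_UNIV_cart_gen)

abbreviation substd :: "'n::finite set \<Rightarrow> (complex^'n) set" where
  "substd X \<equiv> {x. \<forall>i. i \<notin> X \<longrightarrow> x$i = 0}"

lemma subspace_substd: "vec.subspace (substd X)"
  unfolding vec.subspace_def by auto

lemma dim_sum_int:
  assumes "vec.subspace (U::(complex^'n::finite) set)" "vec.subspace V"
  shows "vec.dim {x + y |x y. x \<in> U \<and> y \<in> V} + vec.dim (U \<inter> V) = vec.dim U + vec.dim V"
  by (rule vec.dim_sums_Int[OF assms])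

lemma codimfix_id: "codimfix (mat 1 :: complex^'n::finite^'n) = 0"
proof -
  have "fixsp (mat 1 :: complex^'n^'n) = UNIV" by (simp add: fixsp_def)
  then show ?thesis using vec_dim_card[where 'a=complex and 'n='n] by (simp only: codimfix_def)
qed

lemma codimfix_mult_le:
  fixes g h :: "complex^'n::finite^'n"
  assumes "codimfix g = 1"
  shows "codimfix (g ** h) \<le> codimfix h + 1"
proof -
  let ?U = "fixsp g" and ?V = "fixsp h"
  have s: "vec.dim {x + y |x y. x \<in> ?U \<and> y \<in> ?V} + vec.dim (?U \<inter> ?V) = vec.dim ?U + vec.dim ?V"
    by (rule dim_sum_int[OF subspace_fixsp subspace_fixsp])
  have "vec.dim {x + y |x y. x \<in> ?U \<and> y \<in> ?V} \<le> CARD('n)" by (rule dim_le_n)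
  moreover have "vec.dim ?U = CARD('n) - 1" using assms dim_fixsp_le[of g] by (simp add: codimfix_def)
  moreover have "CARD('n) \<ge> 1" by (simp add: Suc_leI)
  moreover have "?U \<inter> ?V \<subseteq> fixsp (g ** h)"
    by (auto simp: fixsp_def matrix_vector_mul_assoc[symmetric])
  then have "vec.dim (?U \<inter> ?V) \<le> vec.dim (fixsp (g ** h))" by (rule vec.dim_subset)
  ultimately show ?thesis using s dim_fixsp_le[of h] dim_fixsp_le[of "g ** h"]
    by (simp add: codimfix_def)
qed

lemma dim_le_by_substd:
  assumes "vec.subspace (W::(complex^'n::finite) set)"
    and "\<And>v. v \<in> W \<Longrightarrow> (\<forall>i. i \<notin> X \<longrightarrow> v$i = 0) \<Longrightarrow> v = 0"
  shows "vec.dim W + card X \<le> CARD('n)"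
proof -
  have s: "vec.dim {x + y |x y. x \<in> W \<and> y \<in> substd X} + vec.dim (W \<inter> substd X) = vec.dim W + vec.dim (substd X)"
    by (rule dim_sum_int[OF assms(1) subspace_substd])
  have "W \<inter> substd X \<subseteq> {0}" using assms(2) by auto
  then have z: "vec.dim (W \<inter> substd X) = 0"
    by simp
  have c: "vec.dim (substd X) = card X" by (rule dim_substandard_cart)
  show ?thesis using s z c dim_le_n[of "{x + y |x y. x \<in> W \<and> y \<in> substd X}"] by linarith
qed

lemma dim_eq_by_substd:
  assumes "vec.subspace (W::(complex^'n::finite) set)"
    and "\<And>v. v \<in> W \<Longrightarrow> (\<forall>i. i \<notin> X \<longrightarrow> v$i = 0) \<Longrightarrow> v = 0"
    and "\<And>v. \<exists>w e. w \<in> W \<and> (\<forall>i. i \<notin> X \<longrightarrow> e$i = 0) \<and> v = w + e"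
  shows "vec.dim W + card X = CARD('n)"
proof -
  have s: "vec.dim {x + y |x y. x \<in> W \<and> y \<in> substd X} + vec.dim (W \<inter> substd X) = vec.dim W + vec.dim (substd X)"
    by (rule dim_sum_int[OF assms(1) subspace_substd])
  have "W \<inter> substd X \<subseteq> {0}" using assms(2) by auto
  then have z: "vec.dim (W \<inter> substd X) = 0"
    by simp
  have c: "vec.dim (substd X) = card X" by (rule dim_substandard_cart)
  have u: "{x + y |x y. x \<in> W \<and> y \<in> substd X} = UNIV" using assms(3) by blast
  show ?thesis using s z c vec_dim_card[where 'a=complex and 'n='n] unfolding u by linarith
qed

lemma codimfix_block:
  fixes w x y :: "complex^'n::finite^'n"
  assumes "fixsp w = fixsp x \<inter> fixsp y"
    and "\<And>v. \<exists>v1 v2. v1 \<in> fixsp x \<and> v2 \<in> fixsp y \<and> v = v1 + v2"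
  shows "codimfix w = codimfix x + codimfix y"
proof -
  have s: "vec.dim {a + b |a b. a \<in> fixsp x \<and> b \<in> fixsp y} + vec.dim (fixsp x \<inter> fixsp y)
      = vec.dim (fixsp x) + vec.dim (fixsp y)"
    by (rule dim_sum_int[OF subspace_fixsp subspace_fixsp])
  have "{a + b |a b. a \<in> fixsp x \<and> b \<in> fixsp y} = UNIV" using assms(2) by blast
  then show ?thesis using s assms(1) dim_fixsp_le[of x] dim_fixsp_le[of y] vec_dim_card[where 'a=complex and 'n='n]
    by (simp add: codimfix_def)
qed

lemma codimfix_le_card:
  fixes x :: "complex^'n::finite^'n"
  assumes "\<And>v. (\<forall>i. i \<in> A \<longrightarrow> v$i = 0) \<Longrightarrow> x *v v = v"
  shows "codimfix x \<le> card A"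
proof -
  have "substd (- A) \<subseteq> fixsp x" using assms by (auto simp: fixsp_def)
  then have "vec.dim (substd (- A)) \<le> vec.dim (fixsp x)" by (rule vec.dim_subset)
  moreover have "vec.dim (substd (- A)) = card (- A)" by (rule dim_substandard_cart)
  moreover have "card (- A) = CARD('n) - card A"
    by (metis Compl_eq_Diff_UNIV card_Diff_subset finite top_greatest)
  ultimately show ?thesis by (simp add: codimfix_def)
qed


(* ---- part 3 ---- *)


lemma fix_mono_iff:
  assumes "bij s"
  shows "v \<in> fixsp (mono_mat m s c) \<longleftrightarrow> (\<forall>k. v$(s k) = zz m (c k) * v$k)"
proof -
  have "v \<in> fixsp (mono_mat m s c) \<longleftrightarrow> (\<forall>i. zz m (c (inv s i)) * v$(inv s i) = v$i)"
    by (simp add: fixsp_def vec_eq_iff mono_mat_mulv[OF assms])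
  also have "\<dots> \<longleftrightarrow> (\<forall>k. zz m (c k) * v$k = v$(s k))"
  proof
    assume h: "\<forall>i. zz m (c (inv s i)) * v$(inv s i) = v$i"
    show "\<forall>k. zz m (c k) * v$k = v$(s k)"
    proof
      fix k show "zz m (c k) * v$k = v$(s k)" using h[rule_format, of "s k"] assms
        by (simp add: bij_is_inj)
    qed
  next
    assume h: "\<forall>k. zz m (c k) * v$k = v$(s k)"
    show "\<forall>i. zz m (c (inv s i)) * v$(inv s i) = v$i"
    proof
      fix i show "zz m (c (inv s i)) * v$(inv s i) = v$i" using h[rule_format, of "inv s i"] assms
        by (simp add: surj_f_inv_f bij_is_surj)
    qed
  qed
  finally show ?thesis by auto
qed

lemma zz_zero: "zz m 0 = 1" by simp

lemma zz_one_cong: assumes "0 < m" "[t = 0] (mod int m)" shows "zz m t = 1"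
  using zz_cong[OF assms] by simp

lemma fix_zero_lemma: assumes "v$k = zz m t * v$k" "zz m t \<noteq> 1" shows "v$k = 0"
proof -
  have "(zz m t - 1) * v$k = 0" using assms(1) by (simp add: algebra_simps)
  then show ?thesis using assms(2) by simp
qed

lemma codimfix_one_dim: assumes "codimfix (g::complex^'n::finite^'n) = 1"
  shows "vec.dim (fixsp g) + 1 = CARD('n)"
  using assms dim_fixsp_le[of g] by (simp add: codimfix_def)

lemma vec_zero2: assumes "\<forall>i. i \<notin> {x,y} \<longrightarrow> v$i = 0" "v$x = 0" "v$y = 0" shows "v = 0"
proof -
  have "v$i = 0" for i using assms by (cases "i = x"; cases "i = y") auto
  then show ?thesis by (simp add: vec_eq_iff)
qed

lemma card2: "x \<noteq> y \<Longrightarrow> card {x, y} = 2" by simp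

lemma reflection_classify:
  fixes s :: "'n::finite \<Rightarrow> 'n" and c :: "'n \<Rightarrow> int"
  assumes m: "0 < m" and s: "bij s" and cd: "codimfix (mono_mat m s c) = 1"
  shows "(s = id \<and> (\<exists>j0. \<forall>l. l \<noteq> j0 \<longrightarrow> [c l = 0] (mod int m)))
       \<or> (\<exists>i j. i \<noteq> j \<and> s = Transposition.transpose i j \<and> (\<forall>l. l \<noteq> i \<longrightarrow> l \<noteq> j \<longrightarrow> [c l = 0] (mod int m))
              \<and> [c i + c j = 0] (mod int m))"
proof (rule ccontr)
  assume bad: "\<not> ?thesis"
  let ?W = "fixsp (mono_mat m s c)"
  have dimW: "vec.dim ?W + 1 = CARD('n)" by (rule codimfix_one_dim[OF cd])
  have F: "\<And>v k. v \<in> ?W \<Longrightarrow> v$(s k) = zz m (c k) * v$k" using fix_mono_iff[OF s] by blast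
  have nz: "\<And>l. \<not> [c l = 0] (mod int m) \<Longrightarrow> zz m (c l) \<noteq> 1"
    using zz_eq_iff[OF m] zz_zero by metis
  have "\<exists>x y. x \<noteq> y \<and> (\<forall>v. v \<in> ?W \<longrightarrow> (\<forall>i. i \<notin> {x,y} \<longrightarrow> v$i = 0) \<longrightarrow> v = 0)"
  proof (cases "s = id")
    case True
    with bad obtain j1 j2 where j: "j1 \<noteq> j2" "\<not> [c j1 = 0] (mod int m)" "\<not> [c j2 = 0] (mod int m)"
      by metis
    have Z: "v$j = 0" if "v \<in> ?W" "\<not> [c j = 0] (mod int m)" for v j
      using F[OF that(1), of j] True nz[OF that(2)] fix_zero_lemma by simp
    have "v = 0" if "v \<in> ?W" "\<forall>i. i \<notin> {j1,j2} \<longrightarrow> v$i = 0" for v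
    proof -
      have "v$j1 = 0" "v$j2 = 0" using Z[OF that(1)] j by auto
      then show ?thesis using that(2) by (metis vec_zero2)
    qed
    then show ?thesis using j(1) by blast
  next
    case False
    then obtain k where k: "s k \<noteq> k" by (metis eq_id_iff)
    show ?thesis
    proof (cases "s (s k) = k")
      case False
      have "s (s k) \<noteq> s k" using k s by (metis bij_is_inj injD)
      moreover have "v = 0" if "v \<in> ?W" "\<forall>i. i \<notin> {s k, s (s k)} \<longrightarrow> v$i = 0" for v
      proof -
        have "v$k = 0" using that(2) k False by auto
        then have "v$(s k) = 0" using F[OF that(1), of k] by simp
        then have "v$(s (s k)) = 0" using F[OF that(1), of "s k"] by simp
        then show ?thesis using that(2) \<open>v$(s k) = 0\<close> by (metis vec_zero2)
      qed
      ultimately show ?thesis by blast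
    next
      case ssk: True
      show ?thesis
      proof (cases "\<exists>k'. s k' \<noteq> k' \<and> k' \<noteq> k \<and> k' \<noteq> s k")
        case True
        then obtain k' where k': "s k' \<noteq> k'" "k' \<noteq> k" "k' \<noteq> s k" by blast
        have inj: "inj s" using s by (simp add: bij_is_inj)
        have d1: "s k \<noteq> s k'" using k' inj by (metis injD)
        have d2: "k \<noteq> s k'" using k' ssk inj by (metis injD)
        have "v = 0" if "v \<in> ?W" "\<forall>i. i \<notin> {s k, s k'} \<longrightarrow> v$i = 0" for v
        proof -
          have "v$k = 0" using that(2) k d2 by auto
          moreover have "v$k' = 0" using that(2) k' by auto
          ultimately have "v$(s k) = 0" "v$(s k') = 0" using F[OF that(1), of k] F[OF that(1), of k'] by simp_all
          then show ?thesis using that(2) by (metis vec_zero2)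
        qed
        then show ?thesis using d1 by blast
      next
        case False
        define i where "i = k"
        define j where "j = s k"
        have ij: "i \<noteq> j" using k by (simp add: i_def j_def)
        have st: "s = Transposition.transpose i j"
        proof
          fix l show "s l = Transposition.transpose i j l"
            using False ssk by (cases "l = i"; cases "l = j") (auto simp: i_def j_def)
        qed
        have sj: "s j = i" using ssk by (simp add: i_def j_def)
        have si: "s i = j" by (simp add: i_def j_def)
        show ?thesis
        proof (cases "\<exists>l. l \<noteq> i \<and> l \<noteq> j \<and> \<not> [c l = 0] (mod int m)")
          case True
          then obtain l where l: "l \<noteq> i" "l \<noteq> j" "\<not> [c l = 0] (mod int m)" by blast
          have "v = 0" if "v \<in> ?W" "\<forall>x. x \<notin> {j, l} \<longrightarrow> v$x = 0" for v
          proof -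
            have "v$i = 0" using that(2) ij l by auto
            then have "v$j = 0" using F[OF that(1), of i] si by simp
            moreover have "v$l = 0" using F[OF that(1), of l] st l nz[OF l(3)] fix_zero_lemma by simp
            ultimately show ?thesis using that(2) by (metis vec_zero2)
          qed
          then show ?thesis using l by (metis)
        next
          case False2: False
          then have "\<not> [c i + c j = 0] (mod int m)" using bad st ij by blast
          then have nz2: "zz m (c j + c i) \<noteq> 1" using nz[of i] zz_eq_iff[OF m, of "c j + c i" 0]
            by (simp add: add.commute)
          have "v = 0" if "v \<in> ?W" "\<forall>x. x \<notin> {i, j} \<longrightarrow> v$x = 0" for v
          proof -
            have e1: "v$j = zz m (c i) * v$i" using F[OF that(1), of i] si by simp
            have e2: "v$i = zz m (c j) * v$j" using F[OF that(1), of j] sj by simp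
            have "v$i = (zz m (c j) * zz m (c i)) * v$i" using e1 e2 by (metis mult.assoc)
            then have "v$i = zz m (c j + c i) * v$i" by (simp only: zz_add)
            then have "v$i = 0" using fix_zero_lemma nz2 by blast
            then have "v$j = 0" using e1 by simp
            then show ?thesis using that(2) \<open>v$i = 0\<close> by (metis vec_zero2)
          qed
          then show ?thesis using ij by blast
        qed
      qed
    qed
  qed
  then obtain x y where xy: "x \<noteq> y" "\<And>v. v \<in> ?W \<Longrightarrow> (\<forall>i. i \<notin> {x,y} \<longrightarrow> v$i = 0) \<Longrightarrow> v = 0"
    by blast
  have "vec.dim ?W + card {x, y} \<le> CARD('n)"
    by (rule dim_le_by_substd[OF subspace_fixsp xy(2)])
  then show False using dimW xy(1) by simp
qed


(* ---- part 4 ---- *)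


lemma Gmpn_I: "u permutes UNIV \<Longrightarrow> [wt_set a UNIV = 0] (mod int p) \<Longrightarrow> mono_mat m u a \<in> Gmpn m p"
  unfolding Gmpn_def by blast

lemma codimfix_from_dim: "vec.dim (fixsp (g::complex^'n::finite^'n)) + 1 = CARD('n) \<Longrightarrow> codimfix g = 1"
  by (simp add: codimfix_def)

lemma diag_refl:
  fixes j0 :: "'n::finite"
  assumes m: "0 < m" and t: "[t = 0] (mod int p)" "\<not> [t = 0] (mod int m)"
  shows "mono_mat m id (\<lambda>l. if l = j0 then t else 0) \<in> reflections m p"
proof -
  let ?c = "\<lambda>l. if l = j0 then t else 0"
  have wt: "wt_set ?c UNIV = t" by (simp add: wt_set_def)
  let ?W = "fixsp (mono_mat m id ?c)"
  have F: "v \<in> ?W \<longleftrightarrow> (\<forall>k. v$k = zz m (?c k) * v$k)" for v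
    using fix_mono_iff[where s=id and m=m and c="?c" and v=v] by simp
  have nz: "zz m t \<noteq> 1" using t(2) zz_eq_iff[OF m, of t 0] by simp
  have "vec.dim ?W + card {j0} = CARD('n)"
  proof (rule dim_eq_by_substd[OF subspace_fixsp])
    fix v assume v: "v \<in> ?W" "\<forall>i. i \<notin> {j0} \<longrightarrow> v$i = 0"
    have "v$j0 = zz m t * v$j0" using F[of v] v(1) by (metis (mono_tags))
    then have "v$j0 = 0" using fix_zero_lemma nz by blast
    then show "v = 0" using v(2) by (auto simp: vec_eq_iff)
  next
    fix v :: "complex^'n"
    let ?w = "\<chi> i. if i = j0 then 0 else v$i"
    let ?e = "\<chi> i. if i = j0 then v$j0 else 0"
    have "?w \<in> ?W" unfolding F by simp
    moreover have "\<forall>i. i \<notin> {j0} \<longrightarrow> ?e$i = 0" by simp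
    moreover have "v = ?w + ?e" by (simp add: vec_eq_iff)
    ultimately show "\<exists>w e. w \<in> ?W \<and> (\<forall>i. i \<notin> {j0} \<longrightarrow> e$i = 0) \<and> v = w + e" by blast
  qed
  then have "codimfix (mono_mat m id ?c) = 1" by (intro codimfix_from_dim) simp
  moreover have "mono_mat m id ?c \<in> Gmpn m p" using t wt by (intro Gmpn_I) (auto simp: permutes_id)
  ultimately show ?thesis by (simp add: reflections_def)
qed

lemma trans_refl:
  fixes i j :: "'n::finite"
  assumes m: "0 < m" and ij: "i \<noteq> j"
  shows "mono_mat m (Transposition.transpose i j) (\<lambda>l. if l = i then t else if l = j then - t else 0) \<in> reflections m p"
proof -
  let ?c = "\<lambda>l. if l = i then t else if l = j then - t else 0"
  let ?s = "Transposition.transpose i j"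
  have wt: "wt_set ?c UNIV = 0"
  proof -
    have "?c = (\<lambda>l. (if l = i then t else 0) + (if l = j then - t else 0))" using ij by auto
    then show ?thesis by (simp add: wt_set_def sum.distrib)
  qed
  let ?W = "fixsp (mono_mat m ?s ?c)"
  have F: "v \<in> ?W \<longleftrightarrow> (\<forall>k. v$(?s k) = zz m (?c k) * v$k)" for v
    by (rule fix_mono_iff) simp
  have Fij: "v \<in> ?W \<longleftrightarrow> v$j = zz m t * v$i" for v
  proof
    assume "v \<in> ?W"
    then have "v$(?s i) = zz m (?c i) * v$i" using F[of v] by blast
    then show "v$j = zz m t * v$i" by simp
  next
    assume h: "v$j = zz m t * v$i"
    have "zz m (- t) * zz m t = 1" using zz_add[where m=m and s="- t" and t=t] by simp
    then have h2: "v$i = zz m (- t) * v$j" using h by (metis mult.assoc mult_1_left)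
    show "v \<in> ?W" unfolding F
    proof
      fix k show "v$(?s k) = zz m (?c k) * v$k"
      proof -
        consider "k = i" | "k = j" | "k \<noteq> i \<and> k \<noteq> j" by blast
        then show ?thesis
        proof cases
          case 1 then show ?thesis using h by simp
        next
          case 2 then show ?thesis using h2 ij by simp
        next
          case 3 then show ?thesis by simp
        qed
      qed
    qed
  qed
  have "vec.dim ?W + card {j} = CARD('n)"
  proof (rule dim_eq_by_substd[OF subspace_fixsp])
    fix v assume v: "v \<in> ?W" "\<forall>x. x \<notin> {j} \<longrightarrow> v$x = 0"
    have "v$i = 0" using v(2) ij by auto
    then have "v$j = 0" using Fij[of v] v(1) by simp
    then show "v = 0" using v(2) by (auto simp: vec_eq_iff)
  next
    fix v :: "complex^'n"
    let ?w = "\<chi> x. if x = j then zz m t * v$i else v$x"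
    let ?e = "\<chi> x. if x = j then v$j - zz m t * v$i else 0"
    have "?w \<in> ?W" using Fij[of ?w] ij by simp
    moreover have "\<forall>x. x \<notin> {j} \<longrightarrow> ?e$x = 0" by simp
    moreover have "v = ?w + ?e" by (simp add: vec_eq_iff)
    ultimately show "\<exists>w e. w \<in> ?W \<and> (\<forall>x. x \<notin> {j} \<longrightarrow> e$x = 0) \<and> v = w + e" by blast
  qed
  then have "codimfix (mono_mat m ?s ?c) = 1" by (intro codimfix_from_dim) simp
  moreover have "mono_mat m ?s ?c \<in> Gmpn m p" using wt
    by (intro Gmpn_I) (auto simp: permutes_swap_id)
  ultimately show ?thesis by (simp add: reflections_def)
qed

lemma trans0_refl:
  fixes i j :: "'n::finite"
  assumes m: "0 < m" and ij: "i \<noteq> j"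
  shows "mono_mat m (Transposition.transpose i j) (\<lambda>l. 0) \<in> reflections m p"
proof -
  have "(\<lambda>l::'n. if l = i then (0::int) else if l = j then - 0 else 0) = (\<lambda>l. 0)" by auto
  then show ?thesis using trans_refl[OF m ij, of 0 p] by simp
qed

lemma gen_diag:
  fixes k0 :: "'n::finite"
  assumes m: "0 < m" and pm: "p dvd m" and F: "finite F"
  shows "\<forall>a. (\<forall>l. l \<notin> insert k0 F \<longrightarrow> a l = 0) \<longrightarrow> [wt_set a UNIV = 0] (mod int p) \<longrightarrow>
     (\<exists>rs. set rs \<subseteq> reflections m p \<and> foldr (**) rs (mat 1) = mono_mat m id a)"
  using F
proof (induction F rule: finite_induct)
  case empty
  show ?case
  proof (intro allI impI)
    fix a :: "'n \<Rightarrow> int"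
    assume z: "\<forall>l. l \<notin> insert k0 {} \<longrightarrow> a l = 0" and w: "[wt_set a UNIV = 0] (mod int p)"
    have aeq: "a = (\<lambda>l. if l = k0 then a k0 else 0)" using z by auto
    have "wt_set a UNIV = a k0" by (subst aeq) (simp add: wt_set_def)
    then have ak0: "[a k0 = 0] (mod int p)" using w by simp
    show "\<exists>rs. set rs \<subseteq> reflections m p \<and> foldr (**) rs (mat 1) = mono_mat m id a"
    proof (cases "[a k0 = 0] (mod int m)")
      case True
      have "mono_mat m id a = mono_mat m id (\<lambda>_. 0)"
        by (rule mono_mat_cong[OF m]) (use True z in \<open>auto\<close>)
      then show ?thesis by (intro exI[of _ "[]"]) (simp add: mono_mat_id)
    next
      case False
      have "mono_mat m id a \<in> reflections m p" using diag_refl[OF m ak0 False, of k0] aeq by simp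
      then show ?thesis by (intro exI[of _ "[mono_mat m id a]"]) simp
    qed
  qed
next
  case (insert j F)
  show ?case
  proof (intro allI impI)
    fix a :: "'n \<Rightarrow> int"
    assume z: "\<forall>l. l \<notin> insert k0 (insert j F) \<longrightarrow> a l = 0" and w: "[wt_set a UNIV = 0] (mod int p)"
    show "\<exists>rs. set rs \<subseteq> reflections m p \<and> foldr (**) rs (mat 1) = mono_mat m id a"
    proof (cases "j = k0")
      case True
      then have "\<forall>l. l \<notin> insert k0 F \<longrightarrow> a l = 0" using z by auto
      then show ?thesis using insert.IH w by blast
    next
      case False
      define a1 where "a1 = (\<lambda>l. if l = j then 0 else if l = k0 then a k0 + a j else a l)"
      define b where "b = (\<lambda>l. if l = j then - a j else if l = k0 then - (- a j) else 0)"
      have z1: "\<forall>l. l \<notin> insert k0 F \<longrightarrow> a1 l = 0" using z by (auto simp: a1_def)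
      have "(\<lambda>l. a1 l) = (\<lambda>l. a l + ((if l = k0 then a j else 0) - (if l = j then a j else 0)))"
        using False by (auto simp: a1_def)
      then have "wt_set a1 UNIV = wt_set a UNIV"
        by (simp add: wt_set_def sum.distrib sum_subtractf)
      then have w1: "[wt_set a1 UNIV = 0] (mod int p)" using w by simp
      obtain rs where rs: "set rs \<subseteq> reflections m p" "foldr (**) rs (mat 1) = mono_mat m id a1"
        using insert.IH z1 w1 by blast
      let ?T1 = "mono_mat m (Transposition.transpose j k0) b"
      let ?T2 = "mono_mat m (Transposition.transpose j k0) (\<lambda>l. 0)"
      have T1: "?T1 \<in> reflections m p" unfolding b_def by (rule trans_refl[OF m False])
      have T2: "?T2 \<in> reflections m p" by (rule trans0_refl[OF m False])
      have "?T1 ** ?T2 ** mono_mat m id a1 = mono_mat m id a"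
      proof -
        have e: "(\<lambda>l. b (Transposition.transpose j k0 l) + a1 l) = a"
        proof
          fix l
          consider "l = j" | "l = k0" | "l \<noteq> j \<and> l \<noteq> k0" by blast
          then show "b (Transposition.transpose j k0 l) + a1 l = a l"
          proof cases
            case 1 then show ?thesis using False by (simp add: b_def a1_def)
          next
            case 2 then show ?thesis using False by (simp add: b_def a1_def)
          next
            case 3 then show ?thesis by (simp add: b_def a1_def)
          qed
        qed
        show ?thesis by (simp add: mono_mat_mult e)
      qed
      then show ?thesis using rs T1 T2
        by (intro exI[of _ "?T1 # ?T2 # rs"]) (simp add: matrix_mul_assoc)
    qed
  qed
qed

lemma generation:
  fixes u :: "'n::finite \<Rightarrow> 'n"
  assumes m: "0 < m" and pm: "p dvd m" and u: "u permutes UNIV"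
  shows "\<forall>a. [wt_set a UNIV = 0] (mod int p) \<longrightarrow>
     (\<exists>rs. set rs \<subseteq> reflections m p \<and> foldr (**) rs (mat 1) = mono_mat m u a)"
  using u finite[of UNIV]
proof (induction rule: permutes_induct)
  case id
  show ?case using gen_diag[OF m pm finite[of "UNIV::'n set"], of undefined] by (simp add: id_def)
next
  case (swap x y q)
  show ?case
  proof (intro allI impI)
    fix a :: "'n \<Rightarrow> int" assume w: "[wt_set a UNIV = 0] (mod int p)"
    obtain rs where rs: "set rs \<subseteq> reflections m p" "foldr (**) rs (mat 1) = mono_mat m q a"
      using swap.IH w by blast
    let ?T = "mono_mat m (Transposition.transpose x y) (\<lambda>l. 0)"
    have T: "?T \<in> reflections m p" by (rule trans0_refl[OF m swap.hyps(3)])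
    have "?T ** mono_mat m q a = mono_mat m (Transposition.transpose x y \<circ> q) a"
      by (simp add: mono_mat_mult)
    then show "\<exists>rs. set rs \<subseteq> reflections m p \<and> foldr (**) rs (mat 1) = mono_mat m (Transposition.transpose x y \<circ> q) a"
      using rs T by (intro exI[of _ "?T # rs"]) simp
  qed
qed

lemma lenR_attained:
  assumes "\<exists>rs. set rs \<subseteq> reflections m p \<and> foldr (**) rs (mat 1) = g"
  shows "\<exists>rs. length rs = lenR m p g \<and> set rs \<subseteq> reflections m p \<and> foldr (**) rs (mat 1) = g"
proof -
  from assms obtain rs where "set rs \<subseteq> reflections m p \<and> foldr (**) rs (mat 1) = g" by blast
  then have "\<exists>k rs. length rs = k \<and> set rs \<subseteq> reflections m p \<and> foldr (**) rs (mat 1) = g" by blast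
  then have "\<exists>rs. length rs = (LEAST k. \<exists>rs. length rs = k \<and> set rs \<subseteq> reflections m p \<and> foldr (**) rs (mat 1) = g)
      \<and> set rs \<subseteq> reflections m p \<and> foldr (**) rs (mat 1) = g"
    by (rule LeastI_ex)
  then show ?thesis by (simp add: lenR_def)
qed

lemma codimfix_le_length:
  fixes rs :: "(complex^'n::finite^'n) list"
  assumes "set rs \<subseteq> reflections m p"
  shows "codimfix (foldr (**) rs (mat 1)) \<le> length rs"
  using assms
proof (induction rs)
  case Nil then show ?case by (simp add: codimfix_id)
next
  case (Cons r rs)
  have "codimfix r = 1" using Cons.prems by (simp add: reflections_def)
  then have "codimfix (r ** foldr (**) rs (mat 1)) \<le> codimfix (foldr (**) rs (mat 1)) + 1"
    by (rule codimfix_mult_le)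
  then show ?case using Cons by simp
qed

lemma lenR_ge_codimfix:
  assumes "\<exists>rs. set rs \<subseteq> reflections m p \<and> foldr (**) rs (mat 1) = g"
  shows "codimfix g \<le> lenR m p g"
  using lenR_attained[OF assms] codimfix_le_length by metis


(* ---- part 5 ---- *)


lemma perm_of_permutes: "(g::'n::finite \<Rightarrow> 'n) permutes UNIV \<Longrightarrow> permutation g"
  using permutation_permutes finite by metis

lemma cycles_of_orbit:
  assumes "(g::'n::finite \<Rightarrow> 'n) permutes UNIV"
  shows "cycles_of g = range (orbit g)"
  using orbit_altdef_permutation[OF perm_of_permutes[OF assms]]
  unfolding cycles_of_def by blast

lemma orbit_same:
  assumes "permutation g" "y \<in> orbit g x" shows "orbit g y = orbit g x"
  using orbit_cyclic_eq3[OF cyclic_on_orbit'[OF assms(1)] assms(2)] .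

lemma self_orb: "permutation g \<Longrightarrow> x \<in> orbit g x"
  by (rule permutation_self_in_orbit)

lemma orbit_sym: assumes "permutation g" "y \<in> orbit g x" shows "x \<in> orbit g y"
  using orbit_same[OF assms] self_orb[OF assms(1)] by auto

lemma orbit_subset_inv:
  assumes "g ` B \<subseteq> B" "x \<in> B" shows "orbit g x \<subseteq> B"
proof
  fix y assume "y \<in> orbit g x" then show "y \<in> B"
    by induct (use assms in auto)
qed

context
  fixes g h :: "'n::finite \<Rightarrow> 'n" and i j :: 'n
  assumes g: "g permutes UNIV" and ij: "i \<noteq> j"
    and hdef: "\<And>x. h x = g (Transposition.transpose i j x)"
begin

private lemma hp: "h permutes UNIV"
proof -
  have "h = g \<circ> Transposition.transpose i j" using hdef by (simp add: fun_eq_iff)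
  then show ?thesis using g by (simp add: permutes_compose permutes_swap_id)
qed

private lemma pg: "permutation g" using g by (rule perm_of_permutes)
private lemma ph: "permutation h" using hp by (rule perm_of_permutes)

private lemma hi: "h i = g j" using hdef by simp
private lemma hj: "h j = g i" using hdef by simp
private lemma ho: "y \<noteq> i \<Longrightarrow> y \<noteq> j \<Longrightarrow> h y = g y" using hdef by simp

private lemma O1: assumes "y \<in> orbit g x" "x = i \<or> x = j" shows "y \<in> orbit h i \<union> orbit h j"
  using assms(1)
proof induct
  case base
  have "h j \<in> orbit h j" "h i \<in> orbit h i" by (rule orbit.base)+
  then show ?case using assms(2) hi hj by auto
next
  case (step y)
  consider "y = i" | "y = j" | "y \<noteq> i \<and> y \<noteq> j" by blast
  then show ?case
  proof cases
    case 1 then show ?thesis using orbit.base[of h j] hj by simp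
  next
    case 2 then show ?thesis using orbit.base[of h i] hi by simp
  next
    case 3
    then have "g y = h y" using ho by simp
    then show ?thesis using step(2) orbit.step[of y h i] orbit.step[of y h j] by auto
  qed
qed

private lemma O2: assumes "y \<notin> orbit g i \<union> orbit g j" shows "orbit h y = orbit g y"
proof (rule orbit_cong[OF self_orb[OF pg]])
  fix s assume s: "s \<in> orbit g y"
  have "s \<noteq> i"
  proof
    assume "s = i" then have "y \<in> orbit g i" using orbit_sym[OF pg s] by simp
    then show False using assms by simp
  qed
  moreover have "s \<noteq> j"
  proof
    assume "s = j" then have "y \<in> orbit g j" using orbit_sym[OF pg s] by simp
    then show False using assms by simp
  qed
  ultimately show "h s = g s" by (rule ho)
qed

private lemma O3: assumes "j \<notin> orbit g i" shows "j \<in> orbit h i"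
proof -
  have "y \<in> orbit h i" if "y \<in> orbit g j" for y
    using that
  proof induct
    case base show ?case using orbit.base[of h i] hi by simp
  next
    case (step y)
    have "y \<noteq> i"
    proof
      assume "y = i" then have "j \<in> orbit g i" using orbit_sym[OF pg step(1)] by simp
      then show False using assms by simp
    qed
    consider "y = j" | "y \<noteq> j" by blast
    then show ?case
    proof cases
      case 1 then show ?thesis using orbit.base[of h i] hi by simp
    next
      case 2 then have "g y = h y" using \<open>y \<noteq> i\<close> ho by simp
      then show ?thesis using step(2) orbit.step[of y h i] by auto
    qed
  qed
  then show ?thesis using self_orb[OF pg, of j] by blast
qed

lemma cyc_swap_count:
  shows "card (cycles_of h) \<le> card (cycles_of g) + 1"
    and "j \<notin> orbit g i \<Longrightarrow> card (cycles_of h) + 1 \<le> card (cycles_of g)"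
proof -
  define R where "R = {orbit g y | y. y \<notin> orbit g i \<union> orbit g j}"
  have ch: "cycles_of h \<subseteq> R \<union> {orbit h i, orbit h j}"
  proof
    fix C assume "C \<in> cycles_of h"
    then obtain y where C: "C = orbit h y" using cycles_of_orbit[OF hp] by auto
    show "C \<in> R \<union> {orbit h i, orbit h j}"
    proof (cases "y \<in> orbit g i \<union> orbit g j")
      case True
      then have "y \<in> orbit h i \<union> orbit h j" using O1 by blast
      then show ?thesis using orbit_same[OF ph] C by blast
    next
      case False
      then show ?thesis using O2 C R_def by blast
    qed
  qed
  have cg: "cycles_of g = R \<union> {orbit g i, orbit g j}"
  proof
    show "cycles_of g \<subseteq> R \<union> {orbit g i, orbit g j}"
    proof
      fix C assume "C \<in> cycles_of g"
      then obtain y where C: "C = orbit g y" using cycles_of_orbit[OF g] by auto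
      show "C \<in> R \<union> {orbit g i, orbit g j}"
      proof (cases "y \<in> orbit g i \<union> orbit g j")
        case True
        then show ?thesis using orbit_same[OF pg] C by blast
      next
        case False
        then show ?thesis using C R_def by blast
      qed
    qed
    show "R \<union> {orbit g i, orbit g j} \<subseteq> cycles_of g"
      using cycles_of_orbit[OF g] R_def by auto
  qed
  have nR: "orbit g i \<notin> R" "orbit g j \<notin> R"
    unfolding R_def using self_orb[OF pg] by blast+
  have fR: "finite R" by simp
  have c1: "card (cycles_of h) \<le> card R + 2"
  proof -
    have "card (cycles_of h) \<le> card (R \<union> {orbit h i, orbit h j})" by (rule card_mono) (use ch in auto)
    also have "\<dots> \<le> card R + card {orbit h i, orbit h j}" by (rule card_Un_le)
    also have "card {orbit h i, orbit h j} \<le> 2" by (simp add: card_insert_le_m1)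
    finally show ?thesis by simp
  qed
  have c2: "card (cycles_of g) \<ge> card R + 1"
  proof -
    have "card (insert (orbit g i) R) = card R + 1" using nR fR by simp
    moreover have "card (insert (orbit g i) R) \<le> card (cycles_of g)" by (rule card_mono) (use cg in auto)
    ultimately show ?thesis by simp
  qed
  show "card (cycles_of h) \<le> card (cycles_of g) + 1" using c1 c2 by simp
  assume nj: "j \<notin> orbit g i"
  have "j \<in> orbit h i" by (rule O3[OF nj])
  then have "orbit h j = orbit h i" by (rule orbit_same[OF ph])
  then have "cycles_of h \<subseteq> insert (orbit h i) R" using ch by auto
  then have "card (cycles_of h) \<le> card (insert (orbit h i) R)" by (intro card_mono) simp_all
  also have "\<dots> \<le> card R + 1" using fR by (simp add: card_insert_if)
  finally have A: "card (cycles_of h) \<le> card R + 1" .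
  have "orbit g i \<noteq> orbit g j" using nj self_orb[OF pg, of j] by blast
  then have "card (cycles_of g) = card R + 2" using cg nR fR by simp
  with A show "card (cycles_of h) + 1 \<le> card (cycles_of g)" by simp
qed

end

lemma cyc_swap_left:
  fixes v :: "'n::finite \<Rightarrow> 'n"
  assumes v: "v permutes UNIV" and ij: "i \<noteq> j"
  shows "card (cycles_of (Transposition.transpose i j \<circ> v)) \<le> card (cycles_of v) + 1"
    and "j \<notin> orbit v i \<Longrightarrow> card (cycles_of (Transposition.transpose i j \<circ> v)) + 1 \<le> card (cycles_of v)"
proof -
  have bv: "bij v" using v by (rule permutes_bij)
  have pv: "permutation v" using v by (rule perm_of_permutes)
  let ?i = "inv v i" and ?j = "inv v j"
  have eq: "Transposition.transpose i j \<circ> v = v \<circ> Transposition.transpose ?i ?j"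
    by (rule transpose_comp_eq[OF bv])
  have ij': "?i \<noteq> ?j" using ij bv by (metis bij_inv_eq_iff)
  show "card (cycles_of (Transposition.transpose i j \<circ> v)) \<le> card (cycles_of v) + 1"
    unfolding eq by (rule cyc_swap_count(1)[OF v ij']) simp
  assume nj: "j \<notin> orbit v i"
  have vi: "v ?i = i" "v ?j = j" using bv by (simp_all add: surj_f_inv_f bij_is_surj)
  have "orbit v ?i = orbit v i" using orbit_same[OF pv, of i ?i] orbit.base[of v ?i] vi by simp
  moreover have "?j \<notin> orbit v i"
  proof
    assume "?j \<in> orbit v i"
    then have "v ?j \<in> orbit v i" by (rule orbit.step)
    then show False using nj vi by simp
  qed
  ultimately have "?j \<notin> orbit v ?i" by simp
  then show "card (cycles_of (Transposition.transpose i j \<circ> v)) + 1 \<le> card (cycles_of v)"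
    unfolding eq using cyc_swap_count(2)[OF v ij', of "v \<circ> Transposition.transpose ?i ?j"] by simp
qed

lemma cycles_of_id: "card (cycles_of (id::'n::finite \<Rightarrow> 'n)) = CARD('n)"
proof -
  have "cycles_of (id::'n \<Rightarrow> 'n) = (\<lambda>i. {i}) ` UNIV" unfolding cycles_of_def by auto
  then show ?thesis by (simp add: card_image)
qed


(* ---- part 6 ---- *)


definition validP :: "nat \<Rightarrow> ('n \<Rightarrow> 'n) \<Rightarrow> ('n \<Rightarrow> int) \<Rightarrow> 'n set set \<Rightarrow> bool" where
  "validP p v b P \<longleftrightarrow> \<Union>P = UNIV \<and> (\<forall>B\<in>P. B \<noteq> {}) \<and> (\<forall>B\<in>P. \<forall>B'\<in>P. B \<noteq> B' \<longrightarrow> B \<inter> B' = {})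
     \<and> (\<forall>B\<in>P. v ` B \<subseteq> B) \<and> (\<forall>B\<in>P. int p dvd wt_set b B)"

definition fB :: "nat \<Rightarrow> ('n \<Rightarrow> int) \<Rightarrow> 'n set \<Rightarrow> nat" where
  "fB m b B = (if int m dvd wt_set b B then 2 else 1)"

definition valP :: "nat \<Rightarrow> ('n \<Rightarrow> int) \<Rightarrow> 'n set set \<Rightarrow> nat" where
  "valP m b P = (\<Sum>B\<in>P. fB m b B)"

lemma perm_image_eq:
  assumes "(v::'n::finite \<Rightarrow> 'n) permutes UNIV" "v ` B \<subseteq> B" shows "v ` B = B"
proof -
  have "inj_on v B" using permutes_inj[OF assms(1)] by (metis inj_on_subset top_greatest)
  then have "card (v ` B) = card B" by (rule card_image)
  then show ?thesis using assms(2) by (simp add: card_subset_eq)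
qed

lemma wt_shift:
  assumes "(v::'n::finite \<Rightarrow> 'n) permutes UNIV" "v ` B \<subseteq> B"
  shows "wt_set (\<lambda>l. c (v l) + b l) B = wt_set c B + wt_set b B"
proof -
  have ij: "inj_on v B" using permutes_inj[OF assms(1)] by (metis inj_on_subset top_greatest)
  have "(\<Sum>y\<in>v ` B. c y) = (\<Sum>l\<in>B. c (v l))"
    using sum.reindex[OF ij, of c] by simp
  then have "(\<Sum>l\<in>B. c (v l)) = (\<Sum>y\<in>v ` B. c y)" by simp
  then have "(\<Sum>l\<in>B. c (v l)) = (\<Sum>y\<in>B. c y)" using perm_image_eq[OF assms] by simp
  then show ?thesis by (simp add: wt_set_def sum.distrib)
qed

lemma wt_union: "A \<inter> B = {} \<Longrightarrow> wt_set b (A \<union> B) = wt_set b A + wt_set b (B::'n::finite set)"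
  by (simp add: wt_set_def sum.union_disjoint[OF finite finite])

lemma dvd_sum_all: "(\<And>l. l \<in> B \<Longrightarrow> (d::int) dvd c l) \<Longrightarrow> d dvd wt_set c B"
  unfolding wt_set_def by (rule dvd_sum) simp

lemma validP_finite: "finite (P :: ('n::finite) set set)" by (rule finite)

lemma block_of:
  assumes "validP p v b P" obtains B where "B \<in> P" "x \<in> B"
proof -
  have "x \<in> \<Union>P" using assms by (simp add: validP_def)
  then show ?thesis using that by (rule UnionE)
qed

lemma block_unique:
  assumes "validP p v b P" "B \<in> P" "B' \<in> P" "x \<in> B" "x \<in> B'" shows "B = B'"
proof (rule ccontr)
  assume "B \<noteq> B'"
  then have "B \<inter> B' = {}" using assms(1-3) by (simp add: validP_def)
  then show False using assms(4,5) by blast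
qed

lemma step_id:
  fixes v' :: "'n::finite \<Rightarrow> 'n"
  assumes pm: "p dvd m" and v': "v' permutes UNIV" and val: "validP p v' b' P'"
    and j0: "\<forall>l. l \<noteq> j0 \<longrightarrow> int m dvd c l" and wc: "int p dvd wt_set c UNIV"
  shows "\<exists>P. validP p v' (\<lambda>l. c (v' l) + b' l) P \<and> valP m b' P' \<le> valP m (\<lambda>l. c (v' l) + b' l) P + 1"
proof -
  let ?b = "\<lambda>l. c (v' l) + b' l"
  have pm': "int p dvd int m" using pm by simp
  have cp: "int p dvd c l" for l
  proof (cases "l = j0")
    case True
    have "wt_set c UNIV = c j0 + wt_set c (UNIV - {j0})"
      unfolding wt_set_def by (simp add: sum.remove)
    moreover have "int p dvd wt_set c (UNIV - {j0})"
      by (rule dvd_sum_all) (use j0 pm' dvd_trans in blast)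
    ultimately show ?thesis using wc True by (metis dvd_add_left_iff)
  next
    case False then show ?thesis using j0 pm' dvd_trans by blast
  qed
  have inv: "\<And>B. B \<in> P' \<Longrightarrow> v' ` B \<subseteq> B" using val by (simp add: validP_def)
  have wB: "wt_set ?b B = wt_set c B + wt_set b' B" if "B \<in> P'" for B
    by (rule wt_shift[OF v' inv[OF that]])
  have wpb: "int p dvd wt_set ?b B" if "B \<in> P'" for B
  proof -
    have "int p dvd wt_set c B" by (rule dvd_sum_all) (rule cp)
    moreover have "int p dvd wt_set b' B" using val that by (simp add: validP_def)
    ultimately show ?thesis using wB[OF that] by simp
  qed
  have valid: "validP p v' ?b P'"
    using val wpb unfolding validP_def by (intro conjI) simp_all
  obtain B0 where B0: "B0 \<in> P'" "j0 \<in> B0" using block_of[OF val] by blast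
  have le: "fB m b' B \<le> fB m ?b B + (if B = B0 then 1 else 0)" if "B \<in> P'" for B
  proof (cases "B = B0")
    case True then show ?thesis by (simp add: fB_def)
  next
    case False
    then have "j0 \<notin> B" using block_unique[OF val that B0(1) _ B0(2)] by blast
    then have "int m dvd wt_set c B" using j0 by (intro dvd_sum_all) auto
    then have "int m dvd wt_set ?b B \<longleftrightarrow> int m dvd wt_set b' B" using wB[OF that]
      by (metis dvd_add_right_iff)
    then show ?thesis by (simp add: fB_def)
  qed
  have "valP m b' P' \<le> (\<Sum>B\<in>P'. fB m ?b B + (if B = B0 then 1 else 0))"
    unfolding valP_def by (rule sum_mono) (rule le)
  also have "\<dots> = valP m ?b P' + 1" using B0(1) by (simp add: valP_def sum.distrib)
  finally show ?thesis using valid by blast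
qed

lemma dvd_wt_swap_block:
  fixes c :: "'n::finite \<Rightarrow> int"
  assumes ij: "i \<noteq> j" and c0: "\<forall>l. l \<noteq> i \<longrightarrow> l \<noteq> j \<longrightarrow> int m dvd c l" and cij: "int m dvd c i + c j"
    and B: "i \<in> B \<longleftrightarrow> j \<in> B"
  shows "int m dvd wt_set c B"
proof (cases "i \<in> B")
  case True
  then have jB: "j \<in> B" using B by simp
  have Beq: "B = insert i (insert j (B - {i, j}))" using True jB by blast
  have "wt_set c B = wt_set c (insert i (insert j (B - {i, j})))" using Beq by simp
  also have "\<dots> = c i + (c j + wt_set c (B - {i, j}))"
    unfolding wt_set_def using ij by (simp add: sum.insert[OF finite])
  finally have "wt_set c B = c i + c j + wt_set c (B - {i, j})" by simp
  moreover have "int m dvd wt_set c (B - {i, j})" by (rule dvd_sum_all) (use c0 in auto)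
  ultimately show ?thesis using cij by simp
next
  case False
  then have "j \<notin> B" using B by simp
  then show ?thesis using False c0 by (intro dvd_sum_all) auto
qed

lemma swap_invariant:
  assumes "v' ` B \<subseteq> B" "i \<in> B \<longleftrightarrow> j \<in> B"
  shows "(Transposition.transpose i j \<circ> v') ` B \<subseteq> B"
proof
  fix y assume "y \<in> (Transposition.transpose i j \<circ> v') ` B"
  then obtain x where x: "x \<in> B" "y = Transposition.transpose i j (v' x)" by auto
  have vx: "v' x \<in> B" using assms(1) x(1) by auto
  consider "v' x = i" | "v' x = j" | "v' x \<noteq> i \<and> v' x \<noteq> j" by blast
  then show "y \<in> B"
  proof cases
    case 1
    then have "y = j" using x(2) by simp
    moreover have "i \<in> B" using vx 1 by simp
    ultimately show ?thesis using assms(2) by simp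
  next
    case 2
    then have "y = i" using x(2) by simp
    moreover have "j \<in> B" using vx 2 by simp
    ultimately show ?thesis using assms(2) by simp
  next
    case 3 then have "y = v' x" using x(2) by simp
    then show ?thesis using vx by simp
  qed
qed

lemma step_swap:
  fixes v' :: "'n::finite \<Rightarrow> 'n"
  assumes pm: "p dvd m" and v': "v' permutes UNIV" and val: "validP p v' b' P'"
    and ij: "i \<noteq> j" and c0: "\<forall>l. l \<noteq> i \<longrightarrow> l \<noteq> j \<longrightarrow> int m dvd c l" and cij: "int m dvd c i + c j"
  shows "\<exists>P. validP p (Transposition.transpose i j \<circ> v') (\<lambda>l. c (v' l) + b' l) P \<and>
     card (cycles_of (Transposition.transpose i j \<circ> v')) + valP m b' P' \<le>
     card (cycles_of v') + valP m (\<lambda>l. c (v' l) + b' l) P + 1"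
proof -
  let ?b = "\<lambda>l. c (v' l) + b' l"
  let ?v = "Transposition.transpose i j \<circ> v'"
  have pm': "int p dvd int m" using pm by simp
  have pv: "permutation v'" using v' by (rule perm_of_permutes)
  have inv: "\<And>B. B \<in> P' \<Longrightarrow> v' ` B \<subseteq> B" using val by (simp add: validP_def)
  have wp: "\<And>B. B \<in> P' \<Longrightarrow> int p dvd wt_set b' B" using val by (simp add: validP_def)
  have wB: "wt_set ?b B = wt_set c B + wt_set b' B" if "v' ` B \<subseteq> B" for B
    by (rule wt_shift[OF v' that])
  obtain Bi where Bi: "Bi \<in> P'" "i \<in> Bi" using block_of[OF val] by blast
  obtain Bj where Bj: "Bj \<in> P'" "j \<in> Bj" using block_of[OF val] by blast
  show ?thesis
  proof (cases "Bi = Bj")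
    case True
    have both: "i \<in> B \<longleftrightarrow> j \<in> B" if "B \<in> P'" for B
    proof
      assume "i \<in> B" then have "B = Bi" using block_unique[OF val that Bi(1) _ Bi(2)] by simp
      then show "j \<in> B" using True Bj(2) by simp
    next
      assume "j \<in> B" then have "B = Bj" using block_unique[OF val that Bj(1) _ Bj(2)] by simp
      then show "i \<in> B" using True Bi(2) by simp
    qed
    have cm: "int m dvd wt_set c B" if "B \<in> P'" for B
      by (rule dvd_wt_swap_block[OF ij c0 cij both[OF that]])
    have same: "int m dvd wt_set ?b B \<longleftrightarrow> int m dvd wt_set b' B" if "B \<in> P'" for B
      using wB[OF inv[OF that]] cm[OF that] by (metis dvd_add_right_iff)
    have valid: "validP p ?v ?b P'"
      unfolding validP_def
    proof (intro conjI ballI)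
      show "\<Union>P' = UNIV" using val by (simp add: validP_def)
    next
      fix B assume "B \<in> P'" then show "B \<noteq> {}" using val by (simp add: validP_def)
    next
      fix B B' assume "B \<in> P'" "B' \<in> P'" then show "B \<noteq> B' \<longrightarrow> B \<inter> B' = {}"
        using val by (simp add: validP_def)
    next
      fix B assume B: "B \<in> P'" show "?v ` B \<subseteq> B" by (rule swap_invariant[OF inv[OF B] both[OF B]])
    next
      fix B assume B: "B \<in> P'"
      have "int p dvd wt_set c B" using cm[OF B] pm' dvd_trans by blast
      then show "int p dvd wt_set ?b B" using wB[OF inv[OF B]] wp[OF B] by simp
    qed
    have "valP m ?b P' = valP m b' P'" unfolding valP_def fB_def
      by (rule sum.cong) (use same in auto)
    moreover have "card (cycles_of ?v) \<le> card (cycles_of v') + 1" by (rule cyc_swap_left(1)[OF v' ij])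
    ultimately show ?thesis using valid by (intro exI[of _ P']) simp
  next
    case False
    have nj: "j \<notin> orbit v' i"
    proof
      assume "j \<in> orbit v' i"
      moreover have "orbit v' i \<subseteq> Bi" by (rule orbit_subset_inv[OF inv[OF Bi(1)] Bi(2)])
      ultimately have "j \<in> Bi" by blast
      then show False using block_unique[OF val Bi(1) Bj(1) _ Bj(2)] False by blast
    qed
    have cyc: "card (cycles_of ?v) + 1 \<le> card (cycles_of v')" by (rule cyc_swap_left(2)[OF v' ij nj])
    define Q where "Q = P' - {Bi, Bj}"
    define U where "U = Bi \<union> Bj"
    define P where "P = insert U Q"
    have dij: "Bi \<inter> Bj = {}" using val Bi Bj False by (simp add: validP_def)
    have neither: "i \<notin> B \<and> j \<notin> B" if "B \<in> Q" for B
      using that block_unique[OF val _ Bi(1) _ Bi(2)] block_unique[OF val _ Bj(1) _ Bj(2)]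
      unfolding Q_def by blast
    have cmQ: "int m dvd wt_set c B" if "B \<in> Q" for B
      by (rule dvd_wt_swap_block[OF ij c0 cij]) (use neither[OF that] in blast)
    have QP: "Q \<subseteq> P'" by (simp add: Q_def)
    have invU: "v' ` U \<subseteq> U" using inv[OF Bi(1)] inv[OF Bj(1)] by (auto simp: U_def)
    have cmU: "int m dvd wt_set c U"
      by (rule dvd_wt_swap_block[OF ij c0 cij]) (use Bi Bj in \<open>auto simp: U_def\<close>)
    have wU: "wt_set ?b U = wt_set c U + wt_set b' Bi + wt_set b' Bj"
      using wB[OF invU] wt_union[OF dij, of b'] by (simp add: U_def)
    have UQ: "U \<notin> Q"
    proof
      assume "U \<in> Q"
      then have "i \<notin> U" using neither by blast
      then show False using Bi by (simp add: U_def)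
    qed
    have valid: "validP p ?v ?b P"
      unfolding validP_def
    proof (intro conjI ballI)
      show "\<Union>P = UNIV"
      proof -
        have "\<Union>P = \<Union>P'" using Bi(1) Bj(1) by (auto simp: P_def Q_def U_def)
        then show ?thesis using val by (simp add: validP_def)
      qed
    next
      fix B assume "B \<in> P" then show "B \<noteq> {}" using val QP Bi by (auto simp: P_def U_def validP_def)
    next
      fix B B' assume B: "B \<in> P" "B' \<in> P"
      have dQ: "X \<inter> Y = {}" if "X \<in> P'" "Y \<in> P'" "X \<noteq> Y" for X Y
        using val that by (simp add: validP_def)
      show "B \<noteq> B' \<longrightarrow> B \<inter> B' = {}"
      proof
        assume ne: "B \<noteq> B'"
        consider "B = U" "B' \<in> Q" | "B \<in> Q" "B' = U" | "B \<in> Q" "B' \<in> Q"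
          using B ne by (auto simp: P_def)
        then show "B \<inter> B' = {}"
        proof cases
          case 1 then show ?thesis using dQ[OF Bi(1), of B'] dQ[OF Bj(1), of B'] QP
            by (auto simp: U_def Q_def)
        next
          case 2 then show ?thesis using dQ[OF Bi(1), of B] dQ[OF Bj(1), of B] QP
            by (auto simp: U_def Q_def)
        next
          case 3 then show ?thesis using dQ ne QP by blast
        qed
      qed
    next
      fix B assume B: "B \<in> P"
      show "?v ` B \<subseteq> B"
      proof (cases "B = U")
        case True then show ?thesis using swap_invariant[OF invU] Bi Bj by (auto simp: U_def)
      next
        case False
        then have "B \<in> Q" using B by (simp add: P_def)
        then show ?thesis using swap_invariant[OF inv] neither QP by blast
      qed
    next
      fix B assume B: "B \<in> P"
      show "int p dvd wt_set ?b B"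
      proof (cases "B = U")
        case True
        have "int p dvd wt_set c U" using cmU pm' dvd_trans by blast
        then show ?thesis using True wU wp[OF Bi(1)] wp[OF Bj(1)] by simp
      next
        case False
        then have BQ: "B \<in> Q" using B by (simp add: P_def)
        then have "int p dvd wt_set c B" using cmQ pm' dvd_trans by blast
        then show ?thesis using wB[OF inv] wp QP BQ by auto
      qed
    qed
    have sameQ: "fB m ?b B = fB m b' B" if "B \<in> Q" for B
    proof -
      have "int m dvd wt_set ?b B \<longleftrightarrow> int m dvd wt_set b' B"
        using wB[OF inv] QP that cmQ[OF that] by (metis dvd_add_right_iff subsetD)
      then show ?thesis by (simp add: fB_def)
    qed
    have fU: "fB m b' Bi + fB m b' Bj \<le> fB m ?b U + 2"
    proof (cases "int m dvd wt_set b' Bi \<and> int m dvd wt_set b' Bj")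
      case True
      then have "int m dvd wt_set ?b U" using wU cmU by simp
      then show ?thesis by (simp add: fB_def)
    next
      case False then show ?thesis by (auto simp: fB_def)
    qed
    have fin: "finite Q" by simp
    have "valP m b' P' = fB m b' Bi + fB m b' Bj + (\<Sum>B\<in>Q. fB m b' B)"
    proof -
      have "P' = insert Bi (insert Bj Q)" using Bi(1) Bj(1) by (auto simp: Q_def)
      moreover have "Bi \<notin> insert Bj Q" "Bj \<notin> Q" using False by (auto simp: Q_def)
      ultimately show ?thesis unfolding valP_def by (simp add: fin)
    qed
    moreover have "valP m ?b P = fB m ?b U + (\<Sum>B\<in>Q. fB m b' B)"
      unfolding valP_def P_def using UQ fin sameQ by simp
    ultimately have "valP m b' P' \<le> valP m ?b P + 2" using fU by simp
    then show ?thesis using valid cyc by (intro exI[of _ P]) simp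
  qed
qed


(* ---- part 7 ---- *)


lemma lower_bound:
  fixes rs :: "(complex^'n::finite^'n) list"
  assumes m: "0 < m" and pm: "p dvd m"
  shows "set rs \<subseteq> reflections m p \<Longrightarrow> v permutes UNIV \<Longrightarrow> foldr (**) rs (mat 1) = mono_mat m v b \<Longrightarrow>
     \<exists>P. validP p v b P \<and> CARD('n) + card (cycles_of v) \<le> length rs + valP m b P"
proof (induction rs arbitrary: v b)
  case Nil
  have e: "mono_mat m id (\<lambda>_. 0) = mono_mat m v b" using Nil(3) by (simp add: mono_mat_id)
  have vid: "v = id" using mono_mat_inj(1)[OF m e] by simp
  have bm: "int m dvd b k" for k using mono_mat_inj(2)[OF m e, of k] by (metis cong_0_iff cong_sym)
  have pm': "int p dvd int m" using pm by simp
  let ?P = "range (\<lambda>k::'n. {k})"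
  have valid: "validP p v b ?P"
    unfolding validP_def
  proof (intro conjI ballI)
    show "\<Union>?P = UNIV" by auto
  next
    fix B assume "B \<in> ?P" then show "B \<noteq> {}" by auto
  next
    fix B B' assume "B \<in> ?P" "B' \<in> ?P" then show "B \<noteq> B' \<longrightarrow> B \<inter> B' = {}" by auto
  next
    fix B assume "B \<in> ?P" then show "v ` B \<subseteq> B" using vid by auto
  next
    fix B assume "B \<in> ?P"
    then obtain k where "B = {k}" by auto
    then show "int p dvd wt_set b B" using dvd_trans[OF pm' bm[of k]] by (simp add: wt_set_def)
  qed
  have "valP m b ?P = (\<Sum>k\<in>(UNIV::'n set). fB m b {k})"
    unfolding valP_def by (subst sum.reindex) (auto simp: inj_on_def)
  also have "\<dots> = (\<Sum>k\<in>(UNIV::'n set). 2)" using bm by (simp add: fB_def wt_set_def)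
  finally have "valP m b ?P = 2 * CARD('n)" by simp
  moreover have "card (cycles_of v) = CARD('n)" using vid cycles_of_id by simp
  ultimately show ?case using valid by (intro exI[of _ ?P]) simp
next
  case (Cons r rs)
  have r: "r \<in> Gmpn m p" "codimfix r = 1" using Cons.prems(1) by (auto simp: reflections_def)
  obtain s c where sc: "r = mono_mat m s c" "s permutes UNIV" "[wt_set c UNIV = 0] (mod int p)"
    using r(1) unfolding Gmpn_def by blast
  have bs: "bij s" using sc(2) by (rule permutes_bij)
  define v' where "v' = inv s \<circ> v"
  define b' where "b' = (\<lambda>l. - c (v' l) + b l)"
  have v'p: "v' permutes UNIV" unfolding v'_def
    by (rule permutes_compose[OF Cons.prems(2) permutes_inv[OF sc(2)]])
  let ?M = "foldr (**) rs (mat 1)"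
  have rM: "r ** ?M = mono_mat m v b" using Cons.prems(3) by simp
  have "?M = (mono_mat m (inv s) (mono_inv_w s c) ** r) ** ?M"
    using mono_mat_inv_left[OF bs, of m c] sc(1) by (simp add: matrix_mul_lid)
  also have "\<dots> = mono_mat m (inv s) (mono_inv_w s c) ** mono_mat m v b"
    by (simp only: matrix_mul_assoc[symmetric] rM)
  also have "\<dots> = mono_mat m v' b'"
    by (simp add: mono_mat_mult v'_def b'_def mono_inv_w_def)
  finally have M: "?M = mono_mat m v' b'" .
  obtain P' where P': "validP p v' b' P'" "CARD('n) + card (cycles_of v') \<le> length rs + valP m b' P'"
    using Cons.IH[OF _ v'p M] Cons.prems(1) by auto
  have bb: "(\<lambda>l. c (v' l) + b' l) = b" by (simp add: b'_def)
  have wc: "int p dvd wt_set c UNIV" using sc(3) by (simp add: cong_0_iff)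
  have cls: "(s = id \<and> (\<exists>j0. \<forall>l. l \<noteq> j0 \<longrightarrow> [c l = 0] (mod int m)))
       \<or> (\<exists>i j. i \<noteq> j \<and> s = Transposition.transpose i j \<and> (\<forall>l. l \<noteq> i \<longrightarrow> l \<noteq> j \<longrightarrow> [c l = 0] (mod int m))
              \<and> [c i + c j = 0] (mod int m))"
    by (rule reflection_classify[OF m bs]) (use r(2) sc(1) in simp)
  then show ?case
  proof
    assume A: "s = id \<and> (\<exists>j0. \<forall>l. l \<noteq> j0 \<longrightarrow> [c l = 0] (mod int m))"
    then obtain j0 where j0: "\<forall>l. l \<noteq> j0 \<longrightarrow> int m dvd c l" by (auto simp: cong_0_iff)
    have vv: "v' = v" using A by (simp add: v'_def)
    obtain P where P: "validP p v' (\<lambda>l. c (v' l) + b' l) P"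
      "valP m b' P' \<le> valP m (\<lambda>l. c (v' l) + b' l) P + 1"
      using step_id[OF pm v'p P'(1) j0 wc] by blast
    have "validP p v b P" using P(1)[unfolded bb, unfolded vv] .
    moreover have "card (cycles_of v) + valP m b' P' \<le> card (cycles_of v') + valP m b P + 1"
      using P(2)[unfolded bb] vv by simp
    ultimately show ?thesis using P'(2) by (intro exI[of _ P]) simp
  next
    assume "\<exists>i j. i \<noteq> j \<and> s = Transposition.transpose i j \<and> (\<forall>l. l \<noteq> i \<longrightarrow> l \<noteq> j \<longrightarrow> [c l = 0] (mod int m))
              \<and> [c i + c j = 0] (mod int m)"
    then obtain i j where ij: "i \<noteq> j" "s = Transposition.transpose i j"
      "\<forall>l. l \<noteq> i \<longrightarrow> l \<noteq> j \<longrightarrow> int m dvd c l" "int m dvd c i + c j"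
      by (auto simp: cong_0_iff)
    have vv: "Transposition.transpose i j \<circ> v' = v"
      using ij(2) by (simp add: v'_def o_assoc)
    obtain P where P: "validP p (Transposition.transpose i j \<circ> v') (\<lambda>l. c (v' l) + b' l) P"
      "card (cycles_of (Transposition.transpose i j \<circ> v')) + valP m b' P' \<le>
       card (cycles_of v') + valP m (\<lambda>l. c (v' l) + b' l) P + 1"
      using step_swap[OF pm v'p P'(1) ij(1) ij(3) ij(4)] by blast
    have "validP p v b P" using P(1)[unfolded bb, unfolded vv] .
    moreover have "card (cycles_of v) + valP m b' P' \<le> card (cycles_of v') + valP m b P + 1"
      using P(2)[unfolded bb, unfolded vv] .
    ultimately show ?thesis using P'(2) by (intro exI[of _ P]) simp
  qed
qed


(* ---- part 8 ---- *)


lemma inj_perm_UNIV: "inj (f::'n::finite \<Rightarrow> 'n) \<Longrightarrow> f permutes UNIV"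
  by (rule bij_imp_permutes) (simp_all add: bij_def finite_UNIV_inj_surj)

locale cycset =
  fixes u :: "'n::finite \<Rightarrow> 'n" and T :: "'n set set"
  assumes u: "u permutes UNIV" and T: "T \<subseteq> cycles_of u"
begin

lemma pu: "permutation u" using u by (rule perm_of_permutes)

lemma cyc_orbit: assumes "C \<in> cycles_of u" "k \<in> C" shows "orbit u k = C"
proof -
  obtain k0 where C: "C = orbit u k0" using assms(1) cycles_of_orbit[OF u] by auto
  show ?thesis using orbit_same[OF pu] assms(2) C by simp
qed

lemma cyc_nonempty: assumes "C \<in> cycles_of u" shows "C \<noteq> {}"
proof -
  obtain k0 where C: "C = orbit u k0" using assms(1) cycles_of_orbit[OF u] by auto
  show ?thesis using orbit_nonempty[of u k0] C by simp
qed

lemma cyc_closed: assumes "C \<in> cycles_of u" "k \<in> C" shows "u k \<in> C"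
  using cyc_orbit[OF assms] orbit.base[of u k] orbit.step by (metis assms(2))

lemma cyc_disj: assumes "C \<in> cycles_of u" "D \<in> cycles_of u" "C \<noteq> D" shows "C \<inter> D = {}"
proof (rule ccontr)
  assume "C \<inter> D \<noteq> {}"
  then obtain k where "k \<in> C" "k \<in> D" by blast
  then show False using cyc_orbit[OF assms(1)] cyc_orbit[OF assms(2)] assms(3) by metis
qed

definition AT where "AT = \<Union>T"
definition ux where "ux = (\<lambda>l. if l \<in> AT then u l else l)"
definition uy where "uy = (\<lambda>l. if l \<in> AT then l else u l)"

lemma AT_closed: "k \<in> AT \<Longrightarrow> u k \<in> AT"
  unfolding AT_def using T cyc_closed by blast

lemma AT_closed': assumes "k \<notin> AT" shows "u k \<notin> AT"
proof
  assume uk: "u k \<in> AT"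
  then obtain C where C: "C \<in> T" "u k \<in> C" unfolding AT_def by blast
  have "u k \<in> orbit u k" by (rule orbit.base)
  then have "orbit u (u k) = orbit u k" by (rule orbit_same[OF pu])
  then have "k \<in> C" using cyc_orbit[of C "u k"] C T self_orb[OF pu, of k] by auto
  then show False using assms C unfolding AT_def by blast
qed

lemma ux_perm: "ux permutes UNIV"
proof (rule inj_perm_UNIV, rule injI)
  fix x y assume e: "ux x = ux y"
  have iu: "inj u" using u by (rule permutes_inj)
  consider "x \<in> AT" "y \<in> AT" | "x \<notin> AT" "y \<notin> AT" | "x \<in> AT" "y \<notin> AT" | "x \<notin> AT" "y \<in> AT" by blast
  then show "x = y"
  proof cases
    case 1 then show ?thesis using e iu by (simp add: ux_def inj_eq)
  next
    case 2 then show ?thesis using e by (simp add: ux_def)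
  next
    case 3 then show ?thesis using e AT_closed[of x] by (simp add: ux_def)
  next
    case 4 then show ?thesis using e AT_closed[of y] by (simp add: ux_def)
  qed
qed

lemma uy_perm: "uy permutes UNIV"
proof (rule inj_perm_UNIV, rule injI)
  fix x y assume e: "uy x = uy y"
  have iu: "inj u" using u by (rule permutes_inj)
  consider "x \<in> AT" "y \<in> AT" | "x \<notin> AT" "y \<notin> AT" | "x \<in> AT" "y \<notin> AT" | "x \<notin> AT" "y \<in> AT" by blast
  then show "x = y"
  proof cases
    case 1 then show ?thesis using e by (simp add: uy_def)
  next
    case 2 then show ?thesis using e iu by (simp add: uy_def inj_eq)
  next
    case 3 then show ?thesis using e AT_closed'[of y] by (simp add: uy_def)
  next
    case 4 then show ?thesis using e AT_closed'[of x] by (simp add: uy_def)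
  qed
qed

lemma ux_uy: "ux \<circ> uy = u"
proof
  fix l show "(ux \<circ> uy) l = u l"
  proof (cases "l \<in> AT")
    case True then show ?thesis by (simp add: ux_def uy_def)
  next
    case False then show ?thesis using AT_closed'[OF False] by (simp add: ux_def uy_def)
  qed
qed

end


(* ---- part 9 ---- *)


locale cycset2 = cycset u T for u :: "'n::finite \<Rightarrow> 'n" and T +
  fixes a :: "'n \<Rightarrow> int" and m :: nat
  assumes m: "0 < m"
begin

definition ax where "ax = (\<lambda>l. if l \<in> AT then a l else 0)"
definition ay where "ay = (\<lambda>l. if l \<in> AT then 0 else a l)"

lemma xy: "mono_mat m ux ax ** mono_mat m uy ay = mono_mat m u a"
proof -
  have "(\<lambda>l. ax (uy l) + ay l) = a"
  proof
    fix l show "ax (uy l) + ay l = a l"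
    proof (cases "l \<in> AT")
      case True then show ?thesis by (simp add: ax_def ay_def uy_def)
    next
      case False then show ?thesis using AT_closed'[OF False] by (simp add: ax_def ay_def uy_def)
    qed
  qed
  then show ?thesis by (simp add: mono_mat_mult ux_uy)
qed

lemma invx_w: "matrix_inv (mono_mat m ux ax) ** mono_mat m u a = mono_mat m uy ay"
proof -
  have b: "bij ux" using ux_perm by (rule permutes_bij)
  have "matrix_inv (mono_mat m ux ax) ** mono_mat m u a
      = (matrix_inv (mono_mat m ux ax) ** mono_mat m ux ax) ** mono_mat m uy ay"
    by (simp only: xy[symmetric] matrix_mul_assoc)
  also have "\<dots> = mono_mat m uy ay"
    by (simp only: mono_matrix_inv[OF b] mono_mat_inv_left[OF b] matrix_mul_lid)
  finally show ?thesis .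
qed

lemma fix_w: "v \<in> fixsp (mono_mat m u a) \<longleftrightarrow> (\<forall>k. v$(u k) = zz m (a k) * v$k)"
  by (rule fix_mono_iff[OF permutes_bij[OF u]])

lemma fix_x: "v \<in> fixsp (mono_mat m ux ax) \<longleftrightarrow> (\<forall>k. k \<in> AT \<longrightarrow> v$(u k) = zz m (a k) * v$k)"
proof -
  have "v \<in> fixsp (mono_mat m ux ax) \<longleftrightarrow> (\<forall>k. v$(ux k) = zz m (ax k) * v$k)"
    by (rule fix_mono_iff[OF permutes_bij[OF ux_perm]])
  also have "\<dots> \<longleftrightarrow> (\<forall>k. k \<in> AT \<longrightarrow> v$(u k) = zz m (a k) * v$k)"
  proof
    assume h: "\<forall>k. v$(ux k) = zz m (ax k) * v$k"
    show "\<forall>k. k \<in> AT \<longrightarrow> v$(u k) = zz m (a k) * v$k"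
    proof (intro allI impI)
      fix k assume "k \<in> AT" then show "v$(u k) = zz m (a k) * v$k"
        using h[rule_format, of k] by (simp add: ux_def ax_def)
    qed
  next
    assume h: "\<forall>k. k \<in> AT \<longrightarrow> v$(u k) = zz m (a k) * v$k"
    show "\<forall>k. v$(ux k) = zz m (ax k) * v$k"
    proof
      fix k show "v$(ux k) = zz m (ax k) * v$k"
        using h[rule_format, of k] by (cases "k \<in> AT") (simp_all add: ux_def ax_def)
    qed
  qed
  finally show ?thesis .
qed

lemma fix_y: "v \<in> fixsp (mono_mat m uy ay) \<longleftrightarrow> (\<forall>k. k \<notin> AT \<longrightarrow> v$(u k) = zz m (a k) * v$k)"
proof -
  have "v \<in> fixsp (mono_mat m uy ay) \<longleftrightarrow> (\<forall>k. v$(uy k) = zz m (ay k) * v$k)"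
    by (rule fix_mono_iff[OF permutes_bij[OF uy_perm]])
  also have "\<dots> \<longleftrightarrow> (\<forall>k. k \<notin> AT \<longrightarrow> v$(u k) = zz m (a k) * v$k)"
  proof
    assume h: "\<forall>k. v$(uy k) = zz m (ay k) * v$k"
    show "\<forall>k. k \<notin> AT \<longrightarrow> v$(u k) = zz m (a k) * v$k"
    proof (intro allI impI)
      fix k assume "k \<notin> AT" then show "v$(u k) = zz m (a k) * v$k"
        using h[rule_format, of k] by (simp add: uy_def ay_def)
    qed
  next
    assume h: "\<forall>k. k \<notin> AT \<longrightarrow> v$(u k) = zz m (a k) * v$k"
    show "\<forall>k. v$(uy k) = zz m (ay k) * v$k"
    proof
      fix k show "v$(uy k) = zz m (ay k) * v$k"
        using h[rule_format, of k] by (cases "k \<in> AT") (simp_all add: uy_def ay_def)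
    qed
  qed
  finally show ?thesis .
qed

lemma codim_split: "codimfix (mono_mat m u a) = codimfix (mono_mat m ux ax) + codimfix (mono_mat m uy ay)"
proof (rule codimfix_block)
  show "fixsp (mono_mat m u a) = fixsp (mono_mat m ux ax) \<inter> fixsp (mono_mat m uy ay)"
  proof (intro set_eqI)
    fix v show "v \<in> fixsp (mono_mat m u a) \<longleftrightarrow> v \<in> fixsp (mono_mat m ux ax) \<inter> fixsp (mono_mat m uy ay)"
      unfolding Int_iff fix_w fix_x fix_y by blast
  qed
next
  fix v :: "complex^'n"
  let ?v1 = "\<chi> i. if i \<in> AT then 0 else v$i"
  let ?v2 = "\<chi> i. if i \<in> AT then v$i else 0"
  have "?v1 \<in> fixsp (mono_mat m ux ax)" unfolding fix_x using AT_closed by simp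
  moreover have "?v2 \<in> fixsp (mono_mat m uy ay)" unfolding fix_y using AT_closed' by simp
  moreover have "v = ?v1 + ?v2" by (simp add: vec_eq_iff)
  ultimately show "\<exists>v1 v2. v1 \<in> fixsp (mono_mat m ux ax) \<and> v2 \<in> fixsp (mono_mat m uy ay) \<and> v = v1 + v2"
    by blast
qed

lemma codim_x_le: "codimfix (mono_mat m ux ax) \<le> card AT"
proof (rule codimfix_le_card)
  fix v :: "complex^'n" assume h: "\<forall>i. i \<in> AT \<longrightarrow> v$i = 0"
  have "v \<in> fixsp (mono_mat m ux ax)" unfolding fix_x using h AT_closed by simp
  then show "mono_mat m ux ax *v v = v" by (simp add: fixsp_def)
qed

end


(* ---- part 10 ---- *)


context cycset
begin

lemma T_sub_AT: "C \<in> T \<Longrightarrow> C \<subseteq> AT" unfolding AT_def by blast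

lemma orbit_ux_in: assumes "C \<in> T" "k \<in> C" shows "orbit ux k = C"
proof -
  have kA: "k \<in> AT" using assms T_sub_AT by blast
  have "ux \<in> AT \<rightarrow> AT" using AT_closed by (auto simp: ux_def)
  then have "orbit ux k = orbit u k"
    by (rule orbit_cong0[OF kA]) (simp add: ux_def)
  also have "\<dots> = C" using cyc_orbit assms T by blast
  finally show ?thesis .
qed

lemma orbit_ux_out: assumes "k \<notin> AT" shows "orbit ux k = {k}"
  using assms by (simp add: orbit_eq_singleton_iff ux_def)

lemma cycles_ux: "cycles_of ux = T \<union> (\<lambda>k. {k}) ` (- AT)"
proof -
  have "range (orbit ux) = T \<union> (\<lambda>k. {k}) ` (- AT)"
  proof
    show "range (orbit ux) \<subseteq> T \<union> (\<lambda>k. {k}) ` (- AT)"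
    proof
      fix X assume "X \<in> range (orbit ux)"
      then obtain k where X: "X = orbit ux k" by auto
      show "X \<in> T \<union> (\<lambda>k. {k}) ` (- AT)"
      proof (cases "k \<in> AT")
        case True
        then obtain C where "C \<in> T" "k \<in> C" unfolding AT_def by blast
        then show ?thesis using orbit_ux_in X by blast
      next
        case False then show ?thesis using orbit_ux_out X by blast
      qed
    qed
  next
    show "T \<union> (\<lambda>k. {k}) ` (- AT) \<subseteq> range (orbit ux)"
    proof
      fix X assume X: "X \<in> T \<union> (\<lambda>k. {k}) ` (- AT)"
      show "X \<in> range (orbit ux)"
      proof (cases "X \<in> T")
        case True
        then obtain k where "k \<in> X" using cyc_nonempty T by blast
        then show ?thesis using orbit_ux_in[OF True] by (metis rangeI)
      next
        case False
        then obtain k where "k \<notin> AT" "X = {k}" using X by blast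
        then show ?thesis using orbit_ux_out by (metis rangeI)
      qed
    qed
  qed
  then show ?thesis using cycles_of_orbit[OF ux_perm] by simp
qed

lemma card_cycles_ux: "card (cycles_of ux) = card T + card (- AT)"
proof -
  have d: "T \<inter> (\<lambda>k. {k}) ` (- AT) = {}"
  proof (rule ccontr)
    assume "T \<inter> (\<lambda>k. {k}) ` (- AT) \<noteq> {}"
    then obtain k where "{k} \<in> T" "k \<notin> AT" by blast
    then show False using T_sub_AT by blast
  qed
  have "card (T \<union> (\<lambda>k. {k}) ` (- AT)) = card T + card ((\<lambda>k. {k}) ` (- AT))"
    by (rule card_Un_disjoint[OF finite finite d])
  moreover have "card ((\<lambda>k. {k}) ` (- AT)) = card (- AT)"
    by (rule card_image) (simp add: inj_on_def)
  ultimately show ?thesis using cycles_ux by simp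
qed

end


(* ---- part 11 ---- *)


context cycset2
begin

lemma comb_bound:
  assumes pm: "p dvd m" and Tdef: "T = {C \<in> S. \<not> int m dvd wt_set a C}" and Sc: "S \<subseteq> cycles_of u"
    and nogood: "\<not> (\<exists>Q. good_partition m p a S Q)" and val: "validP p ux ax P"
  shows "valP m ax P + 1 \<le> card T + 2 * card (- AT)"
proof (rule ccontr)
  assume contra: "\<not> ?thesis"
  define TB where "TB B = {C \<in> T. C \<subseteq> B}" for B
  have inv: "\<And>B. B \<in> P \<Longrightarrow> ux ` B \<subseteq> B" using val by (simp add: validP_def)
  have ne: "\<And>B. B \<in> P \<Longrightarrow> B \<noteq> {}" using val by (simp add: validP_def)
  have wp: "\<And>B. B \<in> P \<Longrightarrow> int p dvd wt_set ax B" using val by (simp add: validP_def)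
  have Tne: "\<And>C. C \<in> T \<Longrightarrow> C \<noteq> {}" using cyc_nonempty T by blast
  have Tnd: "\<And>C. C \<in> T \<Longrightarrow> \<not> int m dvd wt_set a C" using Tdef by blast
  have sub: "C \<subseteq> B" if B: "B \<in> P" and C: "C \<in> T" and k: "k \<in> C" "k \<in> B" for B C k
  proof -
    have "orbit ux k \<subseteq> B" by (rule orbit_subset_inv[OF inv[OF B] k(2)])
    then show ?thesis using orbit_ux_in[OF C k(1)] by simp
  qed
  have inter: "B \<inter> AT = \<Union>(TB B)" if B: "B \<in> P" for B
  proof
    show "B \<inter> AT \<subseteq> \<Union>(TB B)"
    proof
      fix k assume k: "k \<in> B \<inter> AT"
      then obtain C where C: "C \<in> T" "k \<in> C" unfolding AT_def by blast
      then have "C \<subseteq> B" using sub[OF B C(1) C(2)] k by blast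
      then show "k \<in> \<Union>(TB B)" using C by (auto simp: TB_def)
    qed
    show "\<Union>(TB B) \<subseteq> B \<inter> AT" using T_sub_AT by (auto simp: TB_def)
  qed
  have Tdisj: "\<And>C D. C \<in> T \<Longrightarrow> D \<in> T \<Longrightarrow> C \<noteq> D \<Longrightarrow> C \<inter> D = {}"
    using cyc_disj T by blast
  have wtB: "wt_set ax B = (\<Sum>C\<in>TB B. wt_set a C)" if B: "B \<in> P" for B
  proof -
    have "wt_set ax B = (\<Sum>l\<in>B. if l \<in> AT then a l else 0)" by (simp add: wt_set_def ax_def)
    also have "\<dots> = (\<Sum>l\<in>B \<inter> AT. a l)" by (rule sum.inter_restrict[symmetric]) simp
    also have "\<dots> = (\<Sum>l\<in>\<Union>(TB B). a l)" using inter[OF B] by simp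
    also have "\<dots> = (\<Sum>C\<in>TB B. \<Sum>l\<in>C. a l)"
      by (rule sum.Union_disjoint[simplified]) (use Tdisj in \<open>auto simp: TB_def\<close>)
    finally show ?thesis by (simp add: wt_set_def)
  qed
  have sumT: "(\<Sum>B\<in>P. card (TB B)) = card T"
  proof -
    have "T = \<Union>(TB ` P)"
    proof
      show "T \<subseteq> \<Union>(TB ` P)"
      proof
        fix C assume C: "C \<in> T"
        then obtain k where k: "k \<in> C" using Tne by blast
        obtain B where B: "B \<in> P" "k \<in> B" using block_of[OF val] by blast
        have "C \<subseteq> B" by (rule sub[OF B(1) C k B(2)])
        then show "C \<in> \<Union>(TB ` P)" using B C by (auto simp: TB_def)
      qed
      show "\<Union>(TB ` P) \<subseteq> T" by (auto simp: TB_def)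
    qed
    moreover have "card (\<Union>(TB ` P)) = (\<Sum>B\<in>P. card (TB B))"
    proof (rule card_UN_disjoint)
      show "\<forall>i\<in>P. \<forall>j\<in>P. i \<noteq> j \<longrightarrow> TB i \<inter> TB j = {}"
      proof (intro ballI impI)
        fix B B' assume B: "B \<in> P" "B' \<in> P" "B \<noteq> B'"
        have d: "B \<inter> B' = {}" using val B by (simp add: validP_def)
        show "TB B \<inter> TB B' = {}"
        proof (rule ccontr)
          assume "TB B \<inter> TB B' \<noteq> {}"
          then obtain C where "C \<in> T" "C \<subseteq> B" "C \<subseteq> B'" by (auto simp: TB_def)
          then show False using d Tne by blast
        qed
      qed
    qed simp_all
    ultimately show ?thesis by simp
  qed
  have sumO: "(\<Sum>B\<in>P. card (B - AT)) = card (- AT)"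
  proof -
    have "- AT = \<Union>((\<lambda>B. B - AT) ` P)" using val by (auto simp: validP_def)
    moreover have "card (\<Union>((\<lambda>B. B - AT) ` P)) = (\<Sum>B\<in>P. card (B - AT))"
    proof (rule card_UN_disjoint)
      show "\<forall>i\<in>P. \<forall>j\<in>P. i \<noteq> j \<longrightarrow> (i - AT) \<inter> (j - AT) = {}"
      proof (intro ballI impI)
        fix B B' assume "B \<in> P" "B' \<in> P" "B \<noteq> B'"
        then have "B \<inter> B' = {}" using val by (simp add: validP_def)
        then show "(B - AT) \<inter> (B' - AT) = {}" by blast
      qed
    qed simp_all
    ultimately show ?thesis by simp
  qed
  define G where "G B \<longleftrightarrow> (card (B - AT) = 1 \<and> TB B = {})
      \<or> (\<exists>C. TB B = {C}) \<or> ((\<exists>C D. C \<noteq> D \<and> TB B = {C, D}) \<and> int m dvd wt_set ax B)" for B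
  have blk: "fB m ax B \<le> card (TB B) + 2 * card (B - AT) \<and>
      (fB m ax B = card (TB B) + 2 * card (B - AT) \<longrightarrow> G B)" if B: "B \<in> P" for B
  proof (cases "card (B - AT) = 0")
    case False
    have "fB m ax B \<le> 2" by (simp add: fB_def)
    moreover have "fB m ax B = card (TB B) + 2 * card (B - AT) \<longrightarrow> G B"
    proof
      assume eq: "fB m ax B = card (TB B) + 2 * card (B - AT)"
      have "card (TB B) = 0" "card (B - AT) = 1" using eq False \<open>fB m ax B \<le> 2\<close> by linarith+
      then have "TB B = {}" by (simp add: TB_def)
      then show "G B" using \<open>card (B - AT) = 1\<close> by (simp add: G_def)
    qed
    ultimately show ?thesis using False by linarith
  next
    case True
    then have BA: "B - AT = {}" by simp
    then have "B \<inter> AT = B" by blast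
    then have "\<Union>(TB B) = B" using inter[OF B] by simp
    then have "TB B \<noteq> {}" using ne[OF B] by auto
    then have c1: "card (TB B) \<ge> 1" by (simp add: Suc_le_eq card_gt_0_iff)
    consider "card (TB B) = 1" | "card (TB B) = 2" | "card (TB B) \<ge> 3" using c1 by linarith
    then show ?thesis
    proof cases
      case 1
      then obtain C where C: "TB B = {C}" by (rule card_1_singletonE)
      then have "C \<in> T" by (auto simp: TB_def)
      then have "\<not> int m dvd wt_set ax B" using wtB[OF B] C Tnd by simp
      then have "fB m ax B = 1" by (simp add: fB_def)
      then show ?thesis using True 1 C by (simp add: G_def)
    next
      case 2
      then obtain C D where CD: "TB B = {C, D}" "C \<noteq> D" by (auto simp: card_2_iff)
      have "fB m ax B \<le> 2" by (simp add: fB_def)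
      moreover have "fB m ax B = 2 \<Longrightarrow> int m dvd wt_set ax B" by (simp add: fB_def split: if_splits)
      ultimately have "fB m ax B = 2 \<Longrightarrow> G B" using CD unfolding G_def by blast
      then show ?thesis using True 2 \<open>fB m ax B \<le> 2\<close> by simp
    next
      case 3
      have "fB m ax B \<le> 2" by (simp add: fB_def)
      then show ?thesis using 3 by linarith
    qed
  qed
  have alleq: "fB m ax B = card (TB B) + 2 * card (B - AT)" if B: "B \<in> P" for B
  proof (rule ccontr)
    assume "fB m ax B \<noteq> card (TB B) + 2 * card (B - AT)"
    then have "fB m ax B < card (TB B) + 2 * card (B - AT)" using blk[OF B] by linarith
    then have "(\<Sum>B\<in>P. fB m ax B) < (\<Sum>B\<in>P. card (TB B) + 2 * card (B - AT))"
      using blk B by (intro sum_strict_mono_ex1) auto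
    also have "\<dots> = card T + 2 * card (- AT)"
      by (simp add: sum.distrib sum_distrib_left[symmetric] sumT sumO)
    finally show False using contra by (simp add: valP_def)
  qed
  have GB: "\<And>B. B \<in> P \<Longrightarrow> G B" using blk alleq by blast
  define Q where "Q = TB ` {B \<in> P. B \<inter> AT \<noteq> {}} \<union> (\<lambda>C. {C}) ` (S - T)"
  have "good_partition m p a S Q"
    unfolding good_partition_def
  proof (intro conjI)
    show "\<Union>Q = S"
    proof
      show "\<Union>Q \<subseteq> S" using Tdef by (auto simp: Q_def TB_def)
      show "S \<subseteq> \<Union>Q"
      proof
        fix C assume C: "C \<in> S"
        show "C \<in> \<Union>Q"
        proof (cases "C \<in> T")
          case True
          then obtain k where k: "k \<in> C" using Tne by blast
          obtain B where B: "B \<in> P" "k \<in> B" using block_of[OF val] by blast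
          have CB: "C \<subseteq> B" by (rule sub[OF B(1) True k B(2)])
          have "k \<in> AT" using T_sub_AT[OF True] k by blast
          then have "B \<inter> AT \<noteq> {}" using B by blast
          then have "TB B \<in> Q" using B by (auto simp: Q_def)
          moreover have "C \<in> TB B" using True CB by (simp add: TB_def)
          ultimately show ?thesis by blast
        next
          case False
          then have "{C} \<in> Q" using C by (auto simp: Q_def)
          then show ?thesis by blast
        qed
      qed
    qed
  next
    show "\<forall>X\<in>Q. \<forall>Y\<in>Q. X \<noteq> Y \<longrightarrow> X \<inter> Y = {}"
    proof (intro ballI impI)
      fix X Y assume X: "X \<in> Q" and Y: "Y \<in> Q" and XY: "X \<noteq> Y"
      have TBd: "TB B \<inter> TB B' = {}" if "B \<in> P" "B' \<in> P" "TB B \<noteq> TB B'" for B B'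
      proof -
        have "B \<noteq> B'" using that by blast
        then have d: "B \<inter> B' = {}" using val that by (simp add: validP_def)
        show ?thesis
        proof (rule ccontr)
          assume "TB B \<inter> TB B' \<noteq> {}"
          then obtain C where "C \<in> T" "C \<subseteq> B" "C \<subseteq> B'" by (auto simp: TB_def)
          then show False using d Tne by blast
        qed
      qed
      consider (a) B B' where "B \<in> P" "B' \<in> P" "X = TB B" "Y = TB B'"
        | (b) B D where "B \<in> P" "X = TB B" "D \<in> S - T" "Y = {D}"
        | (c) B D where "B \<in> P" "Y = TB B" "D \<in> S - T" "X = {D}"
        | (d) C D where "C \<in> S - T" "X = {C}" "D \<in> S - T" "Y = {D}"
        using X Y unfolding Q_def by blast
      then show "X \<inter> Y = {}"
      proof cases
        case a then show ?thesis using TBd XY by blast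
      next
        case b then show ?thesis by (auto simp: TB_def)
      next
        case c then show ?thesis by (auto simp: TB_def)
      next
        case d then show ?thesis using XY by blast
      qed
    qed
  next
    show "\<forall>X\<in>Q. (\<exists>C. X = {C} \<and> [wt_set a C = 0] (mod int p)) \<or>
             (\<exists>C D. C \<noteq> D \<and> X = {C, D} \<and> [wt_set a C + wt_set a D = 0] (mod int m))"
    proof
      fix X assume X: "X \<in> Q"
      show "(\<exists>C. X = {C} \<and> [wt_set a C = 0] (mod int p)) \<or>
             (\<exists>C D. C \<noteq> D \<and> X = {C, D} \<and> [wt_set a C + wt_set a D = 0] (mod int m))"
      proof (cases "X \<in> (\<lambda>C. {C}) ` (S - T)")
        case True
        then obtain C where C: "C \<in> S - T" "X = {C}" by blast
        then have "int m dvd wt_set a C" using Tdef by blast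
        then have "int p dvd wt_set a C" using pm dvd_trans by (metis of_nat_dvd_iff)
        then show ?thesis using C by (simp add: cong_0_iff)
      next
        case False
        then obtain B where B: "B \<in> P" "B \<inter> AT \<noteq> {}" "X = TB B" using X unfolding Q_def by blast
        have TBne: "TB B \<noteq> {}" using B(2) inter[OF B(1)] by auto
        have "G B" by (rule GB[OF B(1)])
        then consider "\<exists>C. TB B = {C}" | "(\<exists>C D. C \<noteq> D \<and> TB B = {C, D}) \<and> int m dvd wt_set ax B"
          using TBne unfolding G_def by blast
        then show ?thesis
        proof cases
          case 1
          then obtain C where C: "TB B = {C}" by blast
          have "wt_set ax B = wt_set a C" using wtB[OF B(1)] C by simp
          then have "int p dvd wt_set a C" using wp[OF B(1)] by simp
          then show ?thesis using C B(3) by (simp add: cong_0_iff)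
        next
          case 2
          then obtain C D where CD: "C \<noteq> D" "TB B = {C, D}" and md: "int m dvd wt_set ax B" by blast
          have "wt_set ax B = wt_set a C + wt_set a D" using wtB[OF B(1)] CD by simp
          then show ?thesis using md CD B(3) by (auto simp: cong_0_iff)
        qed
      qed
    qed
  qed
  then show False using nogood by blast
qed

end


(* ---- part 12 ---- *)


theorem mainTheorem6:
  fixes m p :: nat and u :: "'n::finite \<Rightarrow> 'n" and a :: "'n \<Rightarrow> int" and S :: "'n set set"
  assumes "0 < m" and "0 < p" and "p dvd m"
    and "u permutes UNIV"
    and "mono_mat m u a \<in> Gmpn m p"
    and "lenR m p (mono_mat m u a) = codimfix (mono_mat m u a)"
    and "S \<subseteq> cycles_of u"
    and "[(\<Sum>C\<in>S. wt_set a C) = 0] (mod int p)"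
    and "\<not> (\<exists>P. good_partition m p a S P)"
  shows "\<exists>x. x \<in> interval_f m p codimfix (mono_mat m u a) \<and>
             x \<notin> interval_f m p (lenR m p) (mono_mat m u a)"
proof -
  note m = assms(1) and pm = assms(3) and u = assms(4) and Sc = assms(7)
  have pm': "int p dvd int m" using pm by simp
  define T where "T = {C \<in> S. \<not> int m dvd wt_set a C}"
  have TS: "T \<subseteq> S" by (auto simp: T_def)
  have Tc: "T \<subseteq> cycles_of u" using TS Sc by blast
  interpret I: cycset2 u T a m
    by unfold_locales (use u Tc m in auto)
  let ?w = "mono_mat m u a"
  let ?x = "mono_mat m I.ux I.ax"
  let ?y = "mono_mat m I.uy I.ay"
  \<comment> \<open>total weight of a\<close>
  obtain u2 a2 where ua2: "?w = mono_mat m u2 a2" "[wt_set a2 UNIV = 0] (mod int p)"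
    using assms(5) unfolding Gmpn_def by blast
  have "[a j = a2 j] (mod int m)" for j by (rule mono_mat_inj(2)[OF m ua2(1)])
  then have "[wt_set a UNIV = wt_set a2 UNIV] (mod int m)" unfolding wt_set_def by (rule cong_sum)
  then have "[wt_set a UNIV = wt_set a2 UNIV] (mod int p)" using pm' by (rule cong_dvd_modulus)
  then have wa: "int p dvd wt_set a UNIV" using ua2(2) by (metis cong_0_iff cong_trans)
  \<comment> \<open>weight of x\<close>
  have Tdisj: "\<And>C D. C \<in> T \<Longrightarrow> D \<in> T \<Longrightarrow> C \<noteq> D \<Longrightarrow> C \<inter> D = {}"
    using I.cyc_disj Tc by blast
  have wax: "wt_set I.ax UNIV = (\<Sum>C\<in>T. wt_set a C)"
  proof -
    have "wt_set I.ax UNIV = (\<Sum>l\<in>UNIV. if l \<in> I.AT then a l else 0)" by (simp add: wt_set_def I.ax_def)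
    also have "\<dots> = (\<Sum>l\<in>UNIV \<inter> I.AT. a l)" by (rule sum.inter_restrict[symmetric]) simp
    also have "\<dots> = (\<Sum>l\<in>\<Union>T. a l)" by (simp add: I.AT_def)
    also have "\<dots> = (\<Sum>C\<in>T. \<Sum>l\<in>C. a l)"
      by (rule sum.Union_disjoint[simplified]) (use Tdisj in auto)
    finally show ?thesis by (simp add: wt_set_def)
  qed
  have "(\<Sum>C\<in>S. wt_set a C) = (\<Sum>C\<in>S - T. wt_set a C) + (\<Sum>C\<in>T. wt_set a C)"
    by (rule sum.subset_diff[OF TS]) simp
  moreover have "int p dvd (\<Sum>C\<in>S - T. wt_set a C)"
  proof (rule dvd_sum)
    fix C assume "C \<in> S - T"
    then have "int m dvd wt_set a C" by (simp add: T_def)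
    then show "int p dvd wt_set a C" using pm' dvd_trans by blast
  qed
  moreover have "int p dvd (\<Sum>C\<in>S. wt_set a C)" using assms(8) by (simp add: cong_0_iff)
  ultimately have "int p dvd (\<Sum>C\<in>T. wt_set a C)" by (metis dvd_add_right_iff)
  then have wx: "int p dvd wt_set I.ax UNIV" using wax by simp
  have "wt_set I.ay UNIV = wt_set a UNIV - wt_set I.ax UNIV"
  proof -
    have "I.ay = (\<lambda>l. a l - I.ax l)" by (auto simp: I.ay_def I.ax_def)
    then show ?thesis by (simp add: wt_set_def sum_subtractf)
  qed
  then have wy: "int p dvd wt_set I.ay UNIV" using wa wx by simp
  have xG: "?x \<in> Gmpn m p" by (rule Gmpn_I[OF I.ux_perm]) (use wx in \<open>simp add: cong_0_iff\<close>)
  have fx: "\<exists>rs. set rs \<subseteq> reflections m p \<and> foldr (**) rs (mat 1) = ?x"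
    using generation[OF m pm I.ux_perm] wx by (simp add: cong_0_iff)
  have fy: "\<exists>rs. set rs \<subseteq> reflections m p \<and> foldr (**) rs (mat 1) = ?y"
    using generation[OF m pm I.uy_perm] wy by (simp add: cong_0_iff)
  \<comment> \<open>lower bound for lenR x\<close>
  obtain rs where rs: "length rs = lenR m p ?x" "set rs \<subseteq> reflections m p" "foldr (**) rs (mat 1) = ?x"
    using lenR_attained[OF fx] by blast
  obtain P where P: "validP p I.ux I.ax P" "CARD('n) + card (cycles_of I.ux) \<le> length rs + valP m I.ax P"
    using lower_bound[OF m pm rs(2) I.ux_perm rs(3)] by blast
  have cb: "valP m I.ax P + 1 \<le> card T + 2 * card (- I.AT)"
    by (rule I.comb_bound[OF pm T_def Sc assms(9) P(1)])
  have nA: "CARD('n) = card I.AT + card (- I.AT)"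
    by (metis Compl_partition card_Un_disjoint finite Int_commute Compl_disjoint)
  have lx: "card I.AT + 1 \<le> lenR m p ?x"
    using P(2) cb I.card_cycles_ux nA rs(1) by linarith
  have ly: "codimfix ?y \<le> lenR m p ?y" by (rule lenR_ge_codimfix[OF fy])
  have cw: "codimfix ?w = codimfix ?x + codimfix ?y" by (rule I.codim_split)
  have cx: "codimfix ?x \<le> card I.AT" by (rule I.codim_x_le)
  have inv: "matrix_inv ?x ** ?w = ?y" by (rule I.invx_w)
  have "?x \<in> interval_f m p codimfix ?w"
    unfolding interval_f_def le_f_def using xG inv cw by simp
  moreover have "?x \<notin> interval_f m p (lenR m p) ?w"
    unfolding interval_f_def le_f_def using inv lx ly cw cx assms(6) by simp
  ultimately show ?thesis by blast
qed


end
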